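(* Let $N\in\mathbb{N}$; for $i=1,\ldots,N$ let $(\mathcal{X}_i,d_{\mathcal{X}_i})$ be a compact metric space and $\mu_i$ a Borel probability measure on $\mathcal{X}_i$; let $\boldsymbol{\mathcal{X}}:=\mathcal{X}_1\times\cdots\times\mathcal{X}_N$ with metric $\sum_id_{\mathcal{X}_i}$, and let $f:\boldsymbol{\mathcal{X}}\to\mathbb{R}$ be $L_f$-Lipschitz ($L_f>0$). Let finite collections $\mathcal{G}_i=\{g_{i,1},\ldots,g_{i,m_i}\}$ be given such that (BSS-a) or (BSS-b) holds; let $m:=\sum_im_i$, $\boldsymbol{g}(\boldsymbol{x})$ the vector of $g_{i,j}(x_i)$ and $\bar{\boldsymbol{g}}$ the vector of $\int g_{i,j}\,\mathrm{d}\mu_i$ (same order). Let $\boldsymbol{\mathcal{X}}^{\dagger(0)}\subseteq\boldsymbol{\mathcal{X}}$ be a finite set such that the linear program $\max\{y_0+\langle\bar{\boldsymbol{g}},\boldsymbol{y}\rangle:y_0+\langle\boldsymbol{g}(\boldsymbol{x}),\boldsymbol{y}\rangle\le f(\boldsymbol{x})\ \forall\boldsymbol{x}\in\boldsymbol{\mathcal{X}}^{\dagger(0)}\}$ has bounded superlevel sets, let $\mathtt{Oracle}$ be a global minimization oracle, and let $\epsilon_{\mathsf{LSIP}}>0$. Run Algorithm 1 with these inputs. Then: (i) Algorithm 1 terminates after finitely many iterations. (ii) $\alpha^{\mathsf{LB}}_{\mathsf{relax}}\le\text{(LSIP)}\le\alpha^{\mathsf{UB}}_{\mathsf{relax}}$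 and $\alpha^{\mathsf{UB}}_{\mathsf{relax}}-\alpha^{\mathsf{LB}}_{\mathsf{relax}}\le\epsilon_{\mathsf{LSIP}}$, where (LSIP) denotes the optimal value of $\max\{y_0+\langle\bar{\boldsymbol{g}},\boldsymbol{y}\rangle:y_0+\langle\boldsymbol{g}(\boldsymbol{x}),\boldsymbol{y}\rangle\le f(\boldsymbol{x})\ \forall\boldsymbol{x}\in\boldsymbol{\mathcal{X}}\}$. (iii) $(\hat y_0,\hat{\boldsymbol{y}})$ is an $\epsilon_{\mathsf{LSIP}}$-optimal solution of (LSIP) and $\hat y_0+\langle\bar{\boldsymbol{g}},\hat{\boldsymbol{y}}\rangle=\alpha^{\mathsf{LB}}_{\mathsf{relax}}$. (iv) $\hat{\mu}$ is an $\epsilon_{\mathsf{LSIP}}$-optimal solution of $\inf_{\mu\in\Gamma([\mu_1]_{\mathcal{G}_1},\ldots,[\mu_N]_{\mathcal{G}_N})}\int_{\boldsymbol{\mathcal{X}}}f\,\mathrm{d}\mu$ and $\int_{\boldsymbol{\mathcal{X}}}f\,\mathrm{d}\hat{\mu}=\alpha^{\mathsf{UB}}_{\mathsf{relax}}$.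
   Context: Conditions (with $\boldsymbol{g}_i(x_i):=(g_{i,1}(x_i),\ldots,g_{i,m_i}(x_i))^\top$): (BSS-a) for each $i$, $\operatorname{supp}(\mu_i)=\mathcal{X}_i$, each $g_{i,j}$ is continuous, and there exist $x_{i,1},\ldots,x_{i,m_i+1}\in\mathcal{X}_i$ with $\boldsymbol{g}_i(x_{i,1}),\ldots,\boldsymbol{g}_i(x_{i,m_i+1})$ affinely independent. (BSS-b) for each $i$, $\mathcal{X}_i$ is a compact subset of a Euclidean space with norm-induced metric, $\mathfrak{C}_i$ is a bounded polyhedral cover of $\mathcal{X}_i$ (finite collection of bounded polyhedra whose union contains $\mathcal{X}_i$, any two intersecting in a common face) with vertex set $V(\mathfrak{C}_i)\subseteq\mathcal{X}_i$, $\{g_{i,0},\ldots,g_{i,m_i}\}$ is a vertex interpolation function set for $\mathfrak{C}_i$ (non-negative functions indexed by the vertices with $g_{\boldsymbol{v}}(\boldsymbol{v}')=\mathbf{1}_{\{\boldsymbol{v}=\boldsymbol{v}'\}}$, summing to $1$ over the vertices of each face on that face, and vanishing on each face not having $\boldsymbol{v}$ as a vertex) with $\int g_{i,j}\,\mathrm{d}\mu_i>0$ for all $j$, and $\mathcal{G}_i=\{g_{i,1},\ldots,g_{i,m_i}\}$. Oracle: for $\boldsymbol{y}\in\mathbb{R}^m$ returns $(\boldsymbol{x}^\star,\beta^\star)$, $\boldsymbol{x}^\star$ a minimizer of $f(\boldsymbol{x})-\langle\boldsymbol{g}(\boldsymbol{x}),\boldsymbol{y}\rangle$ over $\boldsymbol{\mathcal{X}}$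 and $\beta^\star$ the minimal value. Algorithm 1: for $r=0,1,\ldots$: solve the LP $\alpha^{(r)}:=\max\{y_0+\langle\bar{\boldsymbol{g}},\boldsymbol{y}\rangle:y_0+\langle\boldsymbol{g}(\boldsymbol{x}),\boldsymbol{y}\rangle\le f(\boldsymbol{x})\ \forall\boldsymbol{x}\in\boldsymbol{\mathcal{X}}^{\dagger(r)}\}$, obtaining an optimizer $(y^{(r)}_0,\boldsymbol{y}^{(r)})$ and an optimizer $(\mu^{(r)}_{\boldsymbol{x}})_{\boldsymbol{x}\in\boldsymbol{\mathcal{X}}^{\dagger(r)}}$ of the dual LP $\min\{\sum_{\boldsymbol{x}}f(\boldsymbol{x})\mu_{\boldsymbol{x}}:\sum_{\boldsymbol{x}}\mu_{\boldsymbol{x}}=1,\ \sum_{\boldsymbol{x}}\boldsymbol{g}(\boldsymbol{x})\mu_{\boldsymbol{x}}=\bar{\boldsymbol{g}},\ \mu_{\boldsymbol{x}}\ge0\}$; call $\mathtt{Oracle}(\boldsymbol{y}^{(r)})$ obtaining $(\boldsymbol{x}^\star,s^{(r)})$; if $y^{(r)}_0-s^{(r)}\le\epsilon_{\mathsf{LSIP}}$, stop; else choose a finite $\boldsymbol{\mathcal{X}}^\star\subset\boldsymbol{\mathcal{X}}$ with $\boldsymbol{x}^\star\in\boldsymbol{\mathcal{X}}^\star$ and set $\boldsymbol{\mathcal{X}}^{\dagger(r+1)}:=\boldsymbol{\mathcal{X}}^{\dagger(r)}\cup\boldsymbol{\mathcal{X}}^\star$. At the terminal $r$, output $\alpha^{\mathsf{UB}}_{\mathsf{relax}}:=\alpha^{(r)}$,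 $\alpha^{\mathsf{LB}}_{\mathsf{relax}}:=\alpha^{(r)}-y^{(r)}_0+s^{(r)}$, $\hat y_0:=s^{(r)}$, $\hat{\boldsymbol{y}}:=\boldsymbol{y}^{(r)}$, $\hat{\mu}:=\sum_{\boldsymbol{x}\in\boldsymbol{\mathcal{X}}^{\dagger(r)}}\mu^{(r)}_{\boldsymbol{x}}\delta_{\boldsymbol{x}}$. $\Gamma([\mu_1]_{\mathcal{G}_1},\ldots,[\mu_N]_{\mathcal{G}_N})$: probability measures on $\boldsymbol{\mathcal{X}}$ whose $i$-th marginal $\nu$ satisfies $\int g\,\mathrm{d}\nu=\int g\,\mathrm{d}\mu_i$ for all $g\in\mathcal{G}_i$, for all $i$. An $\epsilon$-optimal solution is a feasible solution whose objective is within $\epsilon$ of the optimal value. *)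

theory Defs
  imports "HOL-Probability.Probability"
begin

definition metric_borel :: "'a set \<Rightarrow> ('a \<Rightarrow> 'a \<Rightarrow> real) \<Rightarrow> 'a measure" where
  "metric_borel X d = sigma X {U. openin (Metric_space.mtopology X d) U}"

definition metric_support :: "'a set \<Rightarrow> ('a \<Rightarrow> 'a \<Rightarrow> real) \<Rightarrow> 'a measure \<Rightarrow> 'a set" where
  "metric_support X d M = {x \<in> X. \<forall>e>0. emeasure M (Metric_space.mball X d x e) > 0}"

definition is_norm :: "('a::real_vector \<Rightarrow> real) \<Rightarrow> bool" where
  "is_norm nrm \<longleftrightarrow> (\<forall>x. nrm x = 0 \<longleftrightarrow> x = 0) \<and> (\<forall>c x. nrm (c *\<^sub>R x) = \<bar>c\<bar> * nrm x)
      \<and> (\<forall>x y. nrm (x + y) \<le> nrm x + nrm y)"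

text \<open>Affine independence of the family of points p 0, ..., p k' (k' < K) of R^m, where
  a point p k' of R^m is given by its coordinates p k' j, j = 1..m.\<close>
definition aff_indep_family :: "nat \<Rightarrow> nat \<Rightarrow> (nat \<Rightarrow> nat \<Rightarrow> real) \<Rightarrow> bool" where
  "aff_indep_family m K p \<longleftrightarrow>
     (\<forall>c::nat \<Rightarrow> real. (\<Sum>k<K. c k) = 0 \<and> (\<forall>j\<in>{1..m}. (\<Sum>k<K. c k * p k j) = 0)
        \<longrightarrow> (\<forall>k<K. c k = 0))"

definition BSS_a :: "'a set \<Rightarrow> ('a \<Rightarrow> 'a \<Rightarrow> real) \<Rightarrow> 'a measure \<Rightarrow> nat \<Rightarrow> (nat \<Rightarrow> 'a \<Rightarrow> real) \<Rightarrow> bool" where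
  "BSS_a X d M m g \<longleftrightarrow>
     metric_support X d M = X \<and>
     (\<forall>j\<in>{1..m}. continuous_map (Metric_space.mtopology X d) euclideanreal (g j)) \<and>
     (\<exists>xs::nat \<Rightarrow> 'a. (\<forall>k<m+1. xs k \<in> X) \<and> aff_indep_family m (m+1) (\<lambda>k j. g j (xs k)))"

definition bounded_polyhedral_cover :: "'a::euclidean_space set \<Rightarrow> 'a set set \<Rightarrow> bool" where
  "bounded_polyhedral_cover X C \<longleftrightarrow> finite C \<and> (\<forall>P\<in>C. polyhedron P \<and> bounded P) \<and> X \<subseteq> \<Union>C \<and>
     (\<forall>P\<in>C. \<forall>Q\<in>C. (P \<inter> Q) face_of P \<and> (P \<inter> Q) face_of Q)"

definition cover_faces :: "'a::euclidean_space set set \<Rightarrow> 'a set set" where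
  "cover_faces C = {F. \<exists>P\<in>C. F face_of P}"

definition face_vertices :: "'a::euclidean_space set \<Rightarrow> 'a set" where
  "face_vertices F = {v. v extreme_point_of F}"

definition cover_vertices :: "'a::euclidean_space set set \<Rightarrow> 'a set" where
  "cover_vertices C = (\<Union>P\<in>C. face_vertices P)"

definition vertex_interpolation_set ::
  "'a::euclidean_space set \<Rightarrow> 'a set set \<Rightarrow> nat \<Rightarrow> (nat \<Rightarrow> 'a \<Rightarrow> real) \<Rightarrow> bool" where
  "vertex_interpolation_set X C m g \<longleftrightarrow>
     (\<exists>vtx. bij_betw vtx {0..m} (cover_vertices C) \<and>
        (\<forall>j\<in>{0..m}. \<forall>x\<in>X. g j x \<ge> 0) \<and>
        (\<forall>j\<in>{0..m}. \<forall>j'\<in>{0..m}. g j (vtx j') = (if j = j' then 1 else 0)) \<and>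
        (\<forall>F\<in>cover_faces C. \<forall>x\<in>F \<inter> X. (\<Sum>j\<in>{j\<in>{0..m}. vtx j \<in> face_vertices F}. g j x) = 1) \<and>
        (\<forall>F\<in>cover_faces C. \<forall>j\<in>{0..m}. vtx j \<notin> face_vertices F \<longrightarrow> (\<forall>x\<in>F \<inter> X. g j x = 0)))"

definition BSS_b :: "'a::euclidean_space set \<Rightarrow> ('a \<Rightarrow> 'a \<Rightarrow> real) \<Rightarrow> 'a measure \<Rightarrow> nat \<Rightarrow> (nat \<Rightarrow> 'a \<Rightarrow> real) \<Rightarrow> bool" where
  "BSS_b X d M m g \<longleftrightarrow>
     compact X \<and> (\<exists>nrm. is_norm nrm \<and> (\<forall>x\<in>X. \<forall>y\<in>X. d x y = nrm (x - y))) \<and>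
     (\<exists>C. bounded_polyhedral_cover X C \<and> cover_vertices C \<subseteq> X \<and>
          vertex_interpolation_set X C m g) \<and>
     (\<forall>j\<in>{0..m}. integral\<^sup>L M (g j) > 0)"

text \<open>Index set of the moment functions: pairs (i, j) with i < N (components indexed 0..N-1)
  and j = 1..m i.  A vector y in R^m is represented as a function on this index set.\<close>
definition Jset :: "nat \<Rightarrow> (nat \<Rightarrow> nat) \<Rightarrow> (nat \<times> nat) set" where
  "Jset N m = (SIGMA i:{..<N}. {1..m i})"

definition gdot :: "nat \<Rightarrow> (nat \<Rightarrow> nat) \<Rightarrow> (nat \<Rightarrow> nat \<Rightarrow> 'a \<Rightarrow> real) \<Rightarrow> (nat \<Rightarrow> 'a) \<Rightarrow> (nat \<times> nat \<Rightarrow> real) \<Rightarrow> real" where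
  "gdot N m g x y = (\<Sum>(i,j)\<in>Jset N m. g i j (x i) * y (i,j))"

definition gbar :: "(nat \<Rightarrow> 'a measure) \<Rightarrow> (nat \<Rightarrow> nat \<Rightarrow> 'a \<Rightarrow> real) \<Rightarrow> nat \<Rightarrow> nat \<Rightarrow> real" where
  "gbar \<mu> g i j = integral\<^sup>L (\<mu> i) (g i j)"

definition lp_obj :: "nat \<Rightarrow> (nat \<Rightarrow> nat) \<Rightarrow> (nat \<Rightarrow> 'a measure) \<Rightarrow> (nat \<Rightarrow> nat \<Rightarrow> 'a \<Rightarrow> real) \<Rightarrow> real \<Rightarrow> (nat \<times> nat \<Rightarrow> real) \<Rightarrow> real" where
  "lp_obj N m \<mu> g y0 y = y0 + (\<Sum>(i,j)\<in>Jset N m. gbar \<mu> g i j * y (i,j))"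

definition lp_feasible :: "nat \<Rightarrow> (nat \<Rightarrow> nat) \<Rightarrow> (nat \<Rightarrow> nat \<Rightarrow> 'a \<Rightarrow> real) \<Rightarrow> ((nat \<Rightarrow> 'a) \<Rightarrow> real) \<Rightarrow> (nat \<Rightarrow> 'a) set \<Rightarrow> real \<Rightarrow> (nat \<times> nat \<Rightarrow> real) \<Rightarrow> bool" where
  "lp_feasible N m g f S y0 y \<longleftrightarrow> (\<forall>x\<in>S. y0 + gdot N m g x y \<le> f x)"

definition lp_optimizer where
  "lp_optimizer N m \<mu> g f S y0 y \<longleftrightarrow> lp_feasible N m g f S y0 y \<and>
     (\<forall>z0 z. lp_feasible N m g f S z0 z \<longrightarrow> lp_obj N m \<mu> g z0 z \<le> lp_obj N m \<mu> g y0 y)"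

definition lp_value where
  "lp_value N m \<mu> g f S = Sup {lp_obj N m \<mu> g y0 y | y0 y. lp_feasible N m g f S y0 y}"

definition lp_bounded_superlevel where
  "lp_bounded_superlevel N m \<mu> g f S \<longleftrightarrow>
     (\<forall>c. \<exists>B. \<forall>y0 y. lp_feasible N m g f S y0 y \<and> lp_obj N m \<mu> g y0 y \<ge> c \<longrightarrow>
          \<bar>y0\<bar> \<le> B \<and> (\<forall>p\<in>Jset N m. \<bar>y p\<bar> \<le> B))"

definition dual_feasible where
  "dual_feasible N m \<mu> g S (w :: (nat \<Rightarrow> 'a) \<Rightarrow> real) \<longleftrightarrow> (\<forall>x\<in>S. w x \<ge> 0) \<and> (\<Sum>x\<in>S. w x) = 1 \<and>
     (\<forall>(i,j)\<in>Jset N m. (\<Sum>x\<in>S. g i j (x i) * w x) = gbar \<mu> g i j)"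

definition dual_optimizer where
  "dual_optimizer N m \<mu> g f S w \<longleftrightarrow> dual_feasible N m \<mu> g S w \<and>
     (\<forall>w'. dual_feasible N m \<mu> g S w' \<longrightarrow> (\<Sum>x\<in>S. f x * w x) \<le> (\<Sum>x\<in>S. f x * w' x))"

definition Gamma :: "nat \<Rightarrow> (nat \<Rightarrow> nat) \<Rightarrow> (nat \<Rightarrow> 'a measure) \<Rightarrow> (nat \<Rightarrow> nat \<Rightarrow> 'a \<Rightarrow> real) \<Rightarrow> (nat \<Rightarrow> 'a) measure set" where
  "Gamma N m \<mu> g = {\<nu>. prob_space \<nu> \<and> sets \<nu> = sets (PiM {..<N} \<mu>) \<and>
     (\<forall>i<N. \<forall>j\<in>{1..m i}. integral\<^sup>L (distr \<nu> (\<mu> i) (\<lambda>x. x i)) (g i j) = integral\<^sup>L (\<mu> i) (g i j))}"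

definition mot_value where
  "mot_value N m \<mu> g f = Inf ((\<lambda>\<nu>. integral\<^sup>L \<nu> f) ` Gamma N m \<mu> g)"

definition discrete_measure :: "'b measure \<Rightarrow> 'b set \<Rightarrow> ('b \<Rightarrow> real) \<Rightarrow> 'b measure" where
  "discrete_measure M S w = measure_of (space M) (sets M) (\<lambda>A. \<Sum>x\<in>S \<inter> A. ennreal (w x))"

end

theory Submission
  imports Defs
begin

lemma space_metric_borel: "Metric_space X d \<Longrightarrow> space (metric_borel X d) = X"
  unfolding metric_borel_def
  by (rule space_measure_of) (auto, metis Metric_space.topspace_mtopology openin_subset subsetD)

lemma sets_metric_borel: "Metric_space X d \<Longrightarrow> sets (metric_borel X d) = sigma_sets X {U. openin (Metric_space.mtopology X d) U}"
  unfolding metric_borel_def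
  by (rule sets_measure_of) (auto, metis Metric_space.topspace_mtopology openin_subset subsetD)

lemma cont_meas:
  assumes "Metric_space X d" "continuous_map (Metric_space.mtopology X d) euclideanreal h"
  shows "h \<in> borel_measurable (metric_borel X d)"
proof (rule borel_measurableI)
  fix S :: "real set" assume "open S"
  then have "openin (Metric_space.mtopology X d) {x \<in> topspace (Metric_space.mtopology X d). h x \<in> S}"
    using assms(2) unfolding continuous_map_def by auto
  moreover have "{x \<in> topspace (Metric_space.mtopology X d). h x \<in> S} = h -` S \<inter> space (metric_borel X d)"
    using assms(1) by (auto simp: space_metric_borel Metric_space.topspace_mtopology)
  ultimately show "h -` S \<inter> space (metric_borel X d) \<in> sets (metric_borel X d)"
    using assms(1) by (auto simp: sets_metric_borel intro: sigma_sets.Basic)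
qed

lemma cont_dist:
  assumes "Metric_space X d" "q \<in> X"
  shows "continuous_map (Metric_space.mtopology X d) euclideanreal (\<lambda>x. d x q)"
proof -
  have "continuous_map (mtopology_of (metric (X,d))) euclideanreal (\<lambda>x. mdist (metric (X,d)) (id x) ((\<lambda>_. q) x))"
    apply (rule continuous_map_mdist)
     apply (simp add: continuous_map_id)
    using assms by (simp add: Metric_space.mspace_metric)
  then show ?thesis using assms by (simp add: Metric_space.mtopology_of Metric_space.mdist_metric)
qed


lemma between_finite:
  fixes A B :: "real set"
  assumes "finite A" "finite B" "\<And>a b. a \<in> A \<Longrightarrow> b \<in> B \<Longrightarrow> a \<le> b"
  shows "\<exists>t. (\<forall>a\<in>A. a \<le> t) \<and> (\<forall>b\<in>B. t \<le> b)"
proof (cases "A = {}")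
  case True
  show ?thesis
  proof (cases "B = {}")
    case False
    then show ?thesis using True assms by (intro exI[of _ "Min B"]) auto
  qed (use True in auto)
next
  case False
  then show ?thesis using assms by (intro exI[of _ "Max A"]) auto
qed

lemma farkas_set:
  fixes C :: "(('k \<Rightarrow> real) \<times> real) set" and K :: "'k set"
  assumes "finite K" "finite C" "\<not>(\<exists>z. \<forall>c\<in>C. (\<Sum>k\<in>K. fst c k * z k) \<le> snd c)"
  shows "\<exists>l. (\<forall>c\<in>C. l c \<ge> 0) \<and> (\<forall>k\<in>K. (\<Sum>c\<in>C. l c * fst c k) = 0) \<and> (\<Sum>c\<in>C. l c * snd c) < 0"
  using assms
proof (induction K arbitrary: C rule: finite_induct)
  case empty
  then obtain c where c: "c \<in> C" "snd c < 0" by force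
  have "(\<Sum>c'\<in>C. (if c' = c then 1 else 0) * snd c') = snd c"
  proof -
    have "(\<Sum>c'\<in>C. (if c' = c then 1 else 0) * snd c') = (\<Sum>c'\<in>C. if c' = c then snd c' else 0)"
      by (rule sum.cong) auto
    also have "\<dots> = snd c" using c empty.prems by (simp add: sum.delta')
    finally show ?thesis .
  qed
  then show ?case using c
    by (intro exI[of _ "\<lambda>c'. if c' = c then 1 else 0"]) auto
next
  case (insert k0 K)
  define P where "P = {c\<in>C. fst c k0 > 0}"
  define Nn where "Nn = {c\<in>C. fst c k0 < 0}"
  define Z where "Z = {c\<in>C. fst c k0 = 0}"
  define comb :: "(('k \<Rightarrow> real) \<times> real) \<times> (('k \<Rightarrow> real) \<times> real) \<Rightarrow> ('k \<Rightarrow> real) \<times> real"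
    where "comb = (\<lambda>(p,n). ((\<lambda>k. (- fst n k0) * fst p k + fst p k0 * fst n k),
                                (- fst n k0) * snd p + fst p k0 * snd n))"
  define C' where "C' = Z \<union> comb ` (P \<times> Nn)"
  have finC': "finite C'" unfolding C'_def Z_def P_def Nn_def using insert.prems(1) by auto
  have infeas: "\<not>(\<exists>z. \<forall>c\<in>C'. (\<Sum>k\<in>K. fst c k * z k) \<le> snd c)"
  proof
    assume "\<exists>z. \<forall>c\<in>C'. (\<Sum>k\<in>K. fst c k * z k) \<le> snd c"
    then obtain z where z: "\<And>c. c \<in> C' \<Longrightarrow> (\<Sum>k\<in>K. fst c k * z k) \<le> snd c" by blast
    define val where "val c = (snd c - (\<Sum>k\<in>K. fst c k * z k)) / fst c k0" for c
    have vn: "val n \<le> val p" if p: "p \<in> P" and n: "n \<in> Nn" for p n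
    proof -
      have "comb (p,n) \<in> C'" unfolding C'_def using p n by auto
      from z[OF this] have
        "(\<Sum>k\<in>K. ((- fst n k0) * fst p k + fst p k0 * fst n k) * z k) \<le> (- fst n k0) * snd p + fst p k0 * snd n"
        by (simp add: comb_def)
      moreover have "(\<Sum>k\<in>K. ((- fst n k0) * fst p k + fst p k0 * fst n k) * z k)
          = (- fst n k0) * (\<Sum>k\<in>K. fst p k * z k) + fst p k0 * (\<Sum>k\<in>K. fst n k * z k)"
        (is "?L = ?R")
      proof -
        have "?L = (\<Sum>k\<in>K. (- fst n k0) * (fst p k * z k) + fst p k0 * (fst n k * z k))"
          by (rule sum.cong) (simp_all only: distrib_right mult.assoc)
        also have "\<dots> = ?R" by (simp only: sum.distrib sum_distrib_left)
        finally show ?thesis .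
      qed
      ultimately have ineq: "fst p k0 * ((\<Sum>k\<in>K. fst n k * z k) - snd n) \<le> (- fst n k0) * (snd p - (\<Sum>k\<in>K. fst p k * z k))"
        by (simp only: right_diff_distrib)
      have p0: "fst p k0 > 0" and n0: "fst n k0 < 0" using p n by (auto simp: P_def Nn_def)
      have "val n = (fst p k0 * ((\<Sum>k\<in>K. fst n k * z k) - snd n)) / (fst p k0 * (- fst n k0))"
        unfolding val_def using p0 n0 by (simp add: field_simps)
      also have "\<dots> \<le> ((- fst n k0) * (snd p - (\<Sum>k\<in>K. fst p k * z k))) / (fst p k0 * (- fst n k0))"
        using ineq p0 n0 by (intro divide_right_mono) (auto simp: mult_nonneg_nonpos)
      also have "\<dots> = (snd p - (\<Sum>k\<in>K. fst p k * z k)) / fst p k0"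
        using p0 n0 by (simp add: field_simps)
      also have "\<dots> = val p" unfolding val_def ..
      finally show ?thesis .
    qed
    have f1: "finite (val ` Nn)" unfolding Nn_def using insert.prems(1) by simp
    have f2: "finite (val ` P)" unfolding P_def using insert.prems(1) by simp
    have ab: "a \<le> b" if "a \<in> val ` Nn" "b \<in> val ` P" for a b
      using that vn by blast
    obtain t where t1': "\<forall>a\<in>val ` Nn. a \<le> t" and t2': "\<forall>b\<in>val ` P. t \<le> b"
      using between_finite[OF f1 f2 ab] by blast
    have t1: "val n \<le> t" if "n \<in> Nn" for n using t1' that by blast
    have t2: "t \<le> val p" if "p \<in> P" for p using t2' that by blast
    define z' where "z' = z(k0 := t)"
    have "\<forall>c\<in>C. (\<Sum>k\<in>insert k0 K. fst c k * z' k) \<le> snd c"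
    proof
      fix c assume c: "c \<in> C"
      have s: "(\<Sum>k\<in>insert k0 K. fst c k * z' k) = fst c k0 * t + (\<Sum>k\<in>K. fst c k * z k)"
      proof -
        have s0: "(\<Sum>k\<in>K. fst c k * z' k) = (\<Sum>k\<in>K. fst c k * z k)"
          using insert.hyps(2) by (intro sum.cong) (auto simp: z'_def)
        have "(\<Sum>k\<in>insert k0 K. fst c k * z' k) = fst c k0 * z' k0 + (\<Sum>k\<in>K. fst c k * z' k)"
          using insert.hyps by (simp add: sum.insert)
        then show ?thesis using s0 by (simp add: z'_def)
      qed
      consider "fst c k0 = 0" | "fst c k0 > 0" | "fst c k0 < 0" by linarith
      then show "(\<Sum>k\<in>insert k0 K. fst c k * z' k) \<le> snd c"
      proof cases
        case 1
        then have "c \<in> C'" using c by (auto simp: C'_def Z_def)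
        then show ?thesis using z[of c] s 1 by simp
      next
        case 2
        then have "t \<le> val c" using t2 c by (auto simp: P_def)
        then have "fst c k0 * t \<le> fst c k0 * val c" using 2 by (simp add: mult_left_mono)
        also have "fst c k0 * val c = snd c - (\<Sum>k\<in>K. fst c k * z k)" using 2 by (simp add: val_def)
        finally show ?thesis using s by simp
      next
        case 3
        then have "val c \<le> t" using t1 c by (auto simp: Nn_def)
        then have "fst c k0 * t \<le> fst c k0 * val c" using 3 by (simp add: mult_left_mono_neg)
        also have "fst c k0 * val c = snd c - (\<Sum>k\<in>K. fst c k * z k)" using 3 by (simp add: val_def)
        finally show ?thesis using s by simp
      qed
    qed
    then show False using insert.prems by blast
  qed
  obtain l' where l'0: "\<And>c. c \<in> C' \<Longrightarrow> l' c \<ge> 0"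
    and l'K: "\<And>k. k \<in> K \<Longrightarrow> (\<Sum>c\<in>C'. l' c * fst c k) = 0"
    and l'b: "(\<Sum>c\<in>C'. l' c * snd c) < 0"
    using insert.IH[OF finC' infeas] by blast
  define pick where "pick c = (SOME pn. pn \<in> P \<times> Nn \<and> comb pn = c)" for c
  define coef where "coef c' c = (if c' \<in> Z then (if c = c' then 1 else 0) else
      (if c = fst (pick c') then - fst (snd (pick c')) k0 else 0) + (if c = snd (pick c') then fst (fst (pick c')) k0 else 0))" for c' c
  define l where "l c = (\<Sum>c'\<in>C'. l' c' * coef c' c)" for c
  have pick: "pick c' \<in> P \<times> Nn \<and> comb (pick c') = c'" if "c' \<in> C'" "c' \<notin> Z" for c'
  proof -
    have "\<exists>pn. pn \<in> P \<times> Nn \<and> comb pn = c'" using that by (auto simp: C'_def)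
    then show ?thesis unfolding pick_def by (rule someI_ex)
  qed
  have inner: "(\<Sum>c\<in>C. coef c' c * \<phi> c) = \<phi> c'"
    if lin: "\<And>p n. \<phi> (comb (p,n)) = (- fst n k0) * \<phi> p + fst p k0 * \<phi> n" and c': "c' \<in> C'" for \<phi> c'
  proof (cases "c' \<in> Z")
    case True
    then have "c' \<in> C" by (simp add: Z_def)
    have "(\<Sum>c\<in>C. coef c' c * \<phi> c) = (\<Sum>c\<in>C. if c = c' then \<phi> c else 0)"
      using True by (intro sum.cong) (auto simp: coef_def)
    also have "\<dots> = \<phi> c'" using \<open>c' \<in> C\<close> insert.prems(1) by (simp add: sum.delta')
    finally show ?thesis .
  next
    case False
    obtain p n where pn: "pick c' = (p,n)" by (metis surj_pair)
    with pick[OF c' False] have p: "p \<in> P" and n: "n \<in> Nn" and cc: "comb (p,n) = c'" by auto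
    have "p \<in> C" "n \<in> C" using p n by (auto simp: P_def Nn_def)
    have "(\<Sum>c\<in>C. coef c' c * \<phi> c) = (\<Sum>c\<in>C. (if c = p then - fst n k0 else 0) * \<phi> c + (if c = n then fst p k0 else 0) * \<phi> c)"
      using False pn by (intro sum.cong) (auto simp: coef_def algebra_simps)
    also have "\<dots> = (- fst n k0) * \<phi> p + fst p k0 * \<phi> n"
    proof -
      have "(\<Sum>c\<in>C. (if c = p then - fst n k0 else 0) * \<phi> c + (if c = n then fst p k0 else 0) * \<phi> c)
          = (\<Sum>c\<in>C. (if c = p then - fst n k0 * \<phi> c else 0)) + (\<Sum>c\<in>C. (if c = n then fst p k0 * \<phi> c else 0))"
        by (simp add: sum.distrib[symmetric]) (intro sum.cong, auto)
      then show ?thesis using \<open>p \<in> C\<close> \<open>n \<in> C\<close> insert.prems(1) by (simp add: sum.delta')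
    qed
    also have "\<dots> = \<phi> c'" using lin cc by metis
    finally show ?thesis .
  qed
  have key: "(\<Sum>c\<in>C. l c * \<phi> c) = (\<Sum>c'\<in>C'. l' c' * \<phi> c')"
    if lin: "\<And>p n. \<phi> (comb (p,n)) = (- fst n k0) * \<phi> p + fst p k0 * \<phi> n" for \<phi>
  proof -
    have "(\<Sum>c\<in>C. l c * \<phi> c) = (\<Sum>c\<in>C. \<Sum>c'\<in>C'. l' c' * (coef c' c * \<phi> c))"
      by (simp add: l_def sum_distrib_right mult.assoc)
    also have "\<dots> = (\<Sum>c'\<in>C'. \<Sum>c\<in>C. l' c' * (coef c' c * \<phi> c))" by (rule sum.swap)
    also have "\<dots> = (\<Sum>c'\<in>C'. l' c' * (\<Sum>c\<in>C. coef c' c * \<phi> c))" by (simp add: sum_distrib_left)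
    also have "\<dots> = (\<Sum>c'\<in>C'. l' c' * \<phi> c')" using inner[OF lin] by simp
    finally show ?thesis .
  qed
  have coef0: "coef c' c \<ge> 0" if "c' \<in> C'" for c' c
  proof (cases "c' \<in> Z")
    case False
    obtain p n where pn: "pick c' = (p,n)" by (metis surj_pair)
    with pick[OF that False] have "p \<in> P" "n \<in> Nn" by auto
    then show ?thesis using False pn by (auto simp: coef_def P_def Nn_def)
  qed (simp add: coef_def)
  have k0z: "fst c' k0 = 0" if "c' \<in> C'" for c'
    using that by (auto simp: C'_def Z_def comb_def)
  show ?case
  proof (intro exI[of _ l] conjI ballI)
    fix c assume "c \<in> C"
    show "l c \<ge> 0" unfolding l_def using l'0 coef0 by (intro sum_nonneg) auto
  next
    fix k assume k: "k \<in> insert k0 K"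
    have "(\<Sum>c\<in>C. l c * fst c k) = (\<Sum>c'\<in>C'. l' c' * fst c' k)"
      by (rule key) (simp add: comb_def)
    also have "\<dots> = 0"
    proof (cases "k = k0")
      case True then show ?thesis using k0z by simp
    next
      case False then show ?thesis using k l'K by simp
    qed
    finally show "(\<Sum>c\<in>C. l c * fst c k) = 0" .
  next
    have "(\<Sum>c\<in>C. l c * snd c) = (\<Sum>c'\<in>C'. l' c' * snd c')"
      by (rule key) (simp add: comb_def)
    then show "(\<Sum>c\<in>C. l c * snd c) < 0" using l'b by simp
  qed
qed


lemma farkas_idx:
  fixes a :: "'i \<Rightarrow> 'k \<Rightarrow> real" and b :: "'i \<Rightarrow> real"
  assumes "finite K" "finite I" "\<not>(\<exists>z. \<forall>i\<in>I. (\<Sum>k\<in>K. a i k * z k) \<le> b i)"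
  shows "\<exists>l. (\<forall>i\<in>I. l i \<ge> 0) \<and> (\<forall>k\<in>K. (\<Sum>i\<in>I. l i * a i k) = 0) \<and> (\<Sum>i\<in>I. l i * b i) < 0"
proof -
  define h where "h i = (a i, b i)" for i
  define C where "C = h ` I"
  have "\<not>(\<exists>z. \<forall>c\<in>C. (\<Sum>k\<in>K. fst c k * z k) \<le> snd c)"
    using assms(3) by (auto simp: C_def h_def)
  then obtain lc where lc0: "\<And>c. c \<in> C \<Longrightarrow> lc c \<ge> 0"
    and lcK: "\<And>k. k \<in> K \<Longrightarrow> (\<Sum>c\<in>C. lc c * fst c k) = 0"
    and lcb: "(\<Sum>c\<in>C. lc c * snd c) < 0"
    using farkas_set[OF assms(1), of C] assms(2) unfolding C_def by blast
  define fib where "fib c = {i\<in>I. h i = c}" for c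
  define l where "l i = lc (h i) / card (fib (h i))" for i
  have key: "(\<Sum>i\<in>I. l i * \<phi> (h i)) = (\<Sum>c\<in>C. lc c * \<phi> c)" for \<phi>
  proof -
    have "(\<Sum>i\<in>I. l i * \<phi> (h i)) = (\<Sum>c\<in>h ` I. \<Sum>i\<in>{i\<in>I. h i = c}. l i * \<phi> (h i))"
      using assms(2) by (rule sum.image_gen)
    also have "\<dots> = (\<Sum>c\<in>C. lc c * \<phi> c)"
      unfolding C_def
    proof (rule sum.cong)
      fix c assume c: "c \<in> h ` I"
      have fin: "finite (fib c)" using assms(2) by (simp add: fib_def)
      have ne: "fib c \<noteq> {}" using c by (auto simp: fib_def)
      have "(\<Sum>i\<in>{i\<in>I. h i = c}. l i * \<phi> (h i)) = (\<Sum>i\<in>fib c. lc c / card (fib c) * \<phi> c)"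
        by (intro sum.cong) (auto simp: fib_def l_def)
      also have "\<dots> = card (fib c) * (lc c / card (fib c) * \<phi> c)" by simp
      also have "\<dots> = lc c * \<phi> c" using fin ne by (simp add: card_gt_0_iff)
      finally show "(\<Sum>i\<in>{i\<in>I. h i = c}. l i * \<phi> (h i)) = lc c * \<phi> c" .
    qed simp
    finally show ?thesis .
  qed
  show ?thesis
  proof (intro exI[of _ l] conjI ballI)
    fix i assume "i \<in> I"
    then show "l i \<ge> 0" using lc0 by (auto simp: l_def C_def)
  next
    fix k assume k: "k \<in> K"
    have "(\<Sum>i\<in>I. l i * a i k) = (\<Sum>i\<in>I. l i * (\<lambda>c. fst c k) (h i))" by (simp add: h_def)
    also have "\<dots> = 0" using key[of "\<lambda>c. fst c k"] lcK[OF k] by simp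
    finally show "(\<Sum>i\<in>I. l i * a i k) = 0" .
  next
    have "(\<Sum>i\<in>I. l i * b i) = (\<Sum>i\<in>I. l i * snd (h i))" by (simp add: h_def)
    also have "\<dots> = (\<Sum>c\<in>C. lc c * snd c)" using key[of snd] by simp
    finally show "(\<Sum>i\<in>I. l i * b i) < 0" using lcb by simp
  qed
qed

lemma zero_notin_Jset: "(0, 0) \<notin> Jset N m"
  by (auto simp: Jset_def)

lemma finite_Jset: "finite (Jset N m)"
  by (auto simp: Jset_def)

definition row :: "(nat \<Rightarrow> nat \<Rightarrow> 'a \<Rightarrow> real) \<Rightarrow> (nat \<Rightarrow> 'a) \<Rightarrow> nat \<times> nat \<Rightarrow> real" where
  "row g x k = (if k = (0,0) then 1 else g (fst k) (snd k) (x (fst k)))"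

lemma row_sum: "(\<Sum>k\<in>insert (0,0) (Jset N m). row g x k * z k) = z (0,0) + gdot N m g x z"
proof -
  have "(\<Sum>k\<in>insert (0,0) (Jset N m). row g x k * z k) = row g x (0,0) * z (0,0) + (\<Sum>k\<in>Jset N m. row g x k * z k)"
    using zero_notin_Jset finite_Jset by (simp add: sum.insert)
  also have "(\<Sum>k\<in>Jset N m. row g x k * z k) = gdot N m g x z"
    unfolding gdot_def using zero_notin_Jset by (intro sum.cong) (auto simp: row_def split: prod.splits)
  finally show ?thesis by (simp add: row_def)
qed

lemma weak_duality:
  assumes "finite S" "lp_feasible N m g f S y0 y" "dual_feasible N m \<mu> g S w"
  shows "lp_obj N m \<mu> g y0 y \<le> (\<Sum>x\<in>S. f x * w x)"
proof -
  have w0: "\<And>x. x \<in> S \<Longrightarrow> w x \<ge> 0" and w1: "(\<Sum>x\<in>S. w x) = 1"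
    and wg: "\<And>i j. (i,j) \<in> Jset N m \<Longrightarrow> (\<Sum>x\<in>S. g i j (x i) * w x) = gbar \<mu> g i j"
    using assms(3) unfolding dual_feasible_def by auto
  have "(\<Sum>x\<in>S. (y0 + gdot N m g x y) * w x) = y0 * (\<Sum>x\<in>S. w x) + (\<Sum>x\<in>S. \<Sum>(i,j)\<in>Jset N m. g i j (x i) * y (i,j) * w x)"
    by (simp add: gdot_def algebra_simps sum.distrib sum_distrib_left sum_distrib_right split_def)
  also have "(\<Sum>x\<in>S. \<Sum>(i,j)\<in>Jset N m. g i j (x i) * y (i,j) * w x) = (\<Sum>(i,j)\<in>Jset N m. \<Sum>x\<in>S. g i j (x i) * y (i,j) * w x)"
    unfolding split_def by (rule sum.swap)
  also have "\<dots> = (\<Sum>(i,j)\<in>Jset N m. gbar \<mu> g i j * y (i,j))"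
  proof (rule sum.cong)
    fix p assume p: "p \<in> Jset N m"
    obtain i j where [simp]: "p = (i,j)" by (metis surj_pair)
    have "(\<Sum>x\<in>S. g i j (x i) * y (i,j) * w x) = y (i,j) * (\<Sum>x\<in>S. g i j (x i) * w x)"
      by (simp add: sum_distrib_left algebra_simps)
    then show "(case p of (i,j) \<Rightarrow> \<Sum>x\<in>S. g i j (x i) * y (i,j) * w x) = (case p of (i,j) \<Rightarrow> gbar \<mu> g i j * y (i,j))"
      using wg p by simp
  qed simp
  finally have eq: "(\<Sum>x\<in>S. (y0 + gdot N m g x y) * w x) = lp_obj N m \<mu> g y0 y"
    using w1 by (simp add: lp_obj_def)
  have "(\<Sum>x\<in>S. (y0 + gdot N m g x y) * w x) \<le> (\<Sum>x\<in>S. f x * w x)"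
    using assms(2) w0 by (intro sum_mono mult_right_mono) (auto simp: lp_feasible_def)
  then show ?thesis using eq by simp
qed


lemma sum_opt_insert:
  assumes "finite S"
  shows "(\<Sum>i\<in>insert None (Some ` S). F i) = F None + (\<Sum>x\<in>S. F (Some x))"
proof -
  have "(\<Sum>i\<in>insert None (Some ` S). F i) = F None + (\<Sum>i\<in>Some ` S. F i)"
    using assms by (simp add: sum.insert)
  also have "(\<Sum>i\<in>Some ` S. F i) = (\<Sum>x\<in>S. F (Some x))"
    by (simp add: sum.reindex)
  finally show ?thesis .
qed

lemma cvec_sum: "(\<Sum>k\<in>insert (0,0) (Jset N m). (if k = (0,0) then 1 else gbar \<mu> g (fst k) (snd k)) * z k)
   = lp_obj N m \<mu> g (z (0,0)) z"
proof -
  have "(\<Sum>k\<in>insert (0,0) (Jset N m). (if k = (0,0) then 1 else gbar \<mu> g (fst k) (snd k)) * z k)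
     = z (0,0) + (\<Sum>k\<in>Jset N m. (if k = (0,0) then 1 else gbar \<mu> g (fst k) (snd k)) * z k)"
    using zero_notin_Jset finite_Jset by (simp add: sum.insert)
  also have "(\<Sum>k\<in>Jset N m. (if k = (0,0) then 1 else gbar \<mu> g (fst k) (snd k)) * z k)
      = (\<Sum>(i,j)\<in>Jset N m. gbar \<mu> g i j * z (i,j))"
    using zero_notin_Jset by (intro sum.cong) (auto split: prod.splits)
  finally show ?thesis by (simp add: lp_obj_def)
qed

lemma strong_duality:
  assumes finS: "finite S" and opt: "lp_optimizer N m \<mu> g f S y0 y"
    and dopt: "dual_optimizer N m \<mu> g f S w"
  shows "(\<Sum>x\<in>S. f x * w x) = lp_obj N m \<mu> g y0 y"
proof -
  define J where "J = Jset N m"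
  define K where "K = insert (0,0) J"
  have finK: "finite K" unfolding K_def J_def using finite_Jset by simp
  define obj where "obj = lp_obj N m \<mu> g y0 y"
  have wf: "dual_feasible N m \<mu> g S w" using dopt by (simp add: dual_optimizer_def)
  have feas0: "lp_feasible N m g f S y0 y" using opt by (simp add: lp_optimizer_def)
  have ge: "obj \<le> (\<Sum>x\<in>S. f x * w x)" unfolding obj_def by (rule weak_duality[OF finS feas0 wf])
  have le: "(\<Sum>x\<in>S. f x * w x) \<le> obj + \<delta>" if \<delta>: "\<delta> > 0" for \<delta>
  proof -
    define cvec where "cvec k = (if k = (0,0) then 1 else gbar \<mu> g (fst k) (snd k))" for k
    define I where "I = insert None (Some ` S)"
    define a where "a i = (case i of None \<Rightarrow> (\<lambda>k. - cvec k) | Some x \<Rightarrow> row g x)" for i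
    define b where "b i = (case i of None \<Rightarrow> -(obj + \<delta>) | Some x \<Rightarrow> f x)" for i
    have finI: "finite I" using finS by (simp add: I_def)
    have infeas: "\<not>(\<exists>z. \<forall>i\<in>I. (\<Sum>k\<in>K. a i k * z k) \<le> b i)"
    proof
      assume "\<exists>z. \<forall>i\<in>I. (\<Sum>k\<in>K. a i k * z k) \<le> b i"
      then obtain z where z: "\<And>i. i \<in> I \<Longrightarrow> (\<Sum>k\<in>K. a i k * z k) \<le> b i" by blast
      have feas: "lp_feasible N m g f S (z (0,0)) z"
        unfolding lp_feasible_def
      proof
        fix x assume "x \<in> S"
        then have "(\<Sum>k\<in>K. a (Some x) k * z k) \<le> b (Some x)" using z by (simp add: I_def)
        then show "z (0,0) + gdot N m g x z \<le> f x"
          using row_sum[where N=N and m=m and g=g and x=x and z=z] by (simp add: a_def b_def K_def J_def)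
      qed
      have "(\<Sum>k\<in>K. a None k * z k) \<le> b None" using z by (simp add: I_def)
      then have "- (\<Sum>k\<in>K. cvec k * z k) \<le> -(obj + \<delta>)"
        by (simp add: a_def b_def sum_negf)
      then have "lp_obj N m \<mu> g (z (0,0)) z \<ge> obj + \<delta>"
        using cvec_sum[where N=N and m=m and \<mu>=\<mu> and g=g and z=z] by (simp add: cvec_def K_def J_def)
      moreover have "lp_obj N m \<mu> g (z (0,0)) z \<le> obj"
        using opt feas by (simp add: lp_optimizer_def obj_def)
      ultimately show False using \<delta> by simp
    qed
    obtain l where l0: "\<And>i. i \<in> I \<Longrightarrow> l i \<ge> 0"
      and lK: "\<And>k. k \<in> K \<Longrightarrow> (\<Sum>i\<in>I. l i * a i k) = 0"
      and lb: "(\<Sum>i\<in>I. l i * b i) < 0"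
      using farkas_idx[OF finK finI infeas] by blast
    have lK': "l None * (- cvec k) + (\<Sum>x\<in>S. l (Some x) * row g x k) = 0" if "k \<in> K" for k
      using lK[OF that] sum_opt_insert[OF finS, of "\<lambda>i. l i * a i k"] by (simp add: I_def a_def)
    have lb': "l None * (-(obj + \<delta>)) + (\<Sum>x\<in>S. l (Some x) * f x) < 0"
      using lb sum_opt_insert[OF finS, of "\<lambda>i. l i * b i"] by (simp add: I_def b_def)
    have lS0: "l (Some x) \<ge> 0" if "x \<in> S" for x using l0 that by (simp add: I_def)
    have lN0: "l None \<ge> 0" using l0 by (simp add: I_def)
    have lpos: "l None > 0"
    proof (rule ccontr)
      assume "\<not> l None > 0"
      then have ln: "l None = 0" using lN0 by simp
      define zs where "zs = y((0,0) := y0)"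
      have gz: "gdot N m g x zs = gdot N m g x y" for x
        unfolding gdot_def zs_def using zero_notin_Jset by (intro sum.cong) auto
      have "(\<Sum>x\<in>S. l (Some x) * (\<Sum>k\<in>K. row g x k * zs k)) \<le> (\<Sum>x\<in>S. l (Some x) * f x)"
      proof (intro sum_mono mult_left_mono)
        fix x assume x: "x \<in> S"
        have "(\<Sum>k\<in>K. row g x k * zs k) = y0 + gdot N m g x y"
          using row_sum[where N=N and m=m and g=g and x=x and z=zs] gz by (simp add: K_def J_def zs_def)
        also have "\<dots> \<le> f x" using feas0 x by (simp add: lp_feasible_def)
        finally show "(\<Sum>k\<in>K. row g x k * zs k) \<le> f x" .
        show "l (Some x) \<ge> 0" using lS0 x .
      qed
      moreover have "(\<Sum>x\<in>S. l (Some x) * (\<Sum>k\<in>K. row g x k * zs k)) = (\<Sum>k\<in>K. zs k * (\<Sum>x\<in>S. l (Some x) * row g x k))"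
        by (simp add: sum_distrib_left sum_distrib_right algebra_simps sum.swap[of _ S])
      moreover have "(\<Sum>x\<in>S. l (Some x) * row g x k) = 0" if "k \<in> K" for k
        using lK'[OF that] ln by simp
      ultimately have "0 \<le> (\<Sum>x\<in>S. l (Some x) * f x)" by simp
      then show False using lb' ln by simp
    qed
    define w' where "w' x = l (Some x) / l None" for x
    have wf': "dual_feasible N m \<mu> g S w'"
      unfolding dual_feasible_def
    proof (intro conjI ballI)
      fix x assume "x \<in> S" then show "w' x \<ge> 0" using lS0 lpos by (simp add: w'_def)
    next
      have "(\<Sum>x\<in>S. l (Some x) * row g x (0,0)) = l None"
        using lK'[of "(0,0)"] by (simp add: K_def cvec_def)
      then have "(\<Sum>x\<in>S. l (Some x)) = l None" by (simp add: row_def)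
      then show "(\<Sum>x\<in>S. w' x) = 1" using lpos by (simp add: w'_def sum_divide_distrib[symmetric])
    next
      fix p assume p: "p \<in> Jset N m"
      have pn: "p \<noteq> (0,0)" using p zero_notin_Jset by metis
      have "(\<Sum>x\<in>S. l (Some x) * row g x p) = l None * cvec p"
        using lK'[of p] p by (simp add: K_def J_def)
      then have e1: "(\<Sum>x\<in>S. l (Some x) * g (fst p) (snd p) (x (fst p))) = l None * gbar \<mu> g (fst p) (snd p)"
        using pn unfolding row_def cvec_def by simp
      have "(\<Sum>x\<in>S. g (fst p) (snd p) (x (fst p)) * w' x) = (\<Sum>x\<in>S. l (Some x) * g (fst p) (snd p) (x (fst p))) / l None"
        by (simp add: w'_def sum_divide_distrib mult.commute)
      also have "\<dots> = gbar \<mu> g (fst p) (snd p)" using e1 lpos by simp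
      finally show "case p of (i, j) \<Rightarrow> (\<Sum>x\<in>S. g i j (x i) * w' x) = gbar \<mu> g i j"
        by (simp add: split_def)
    qed
    have "(\<Sum>x\<in>S. f x * w' x) = (\<Sum>x\<in>S. l (Some x) * f x) / l None"
      by (simp add: w'_def sum_divide_distrib mult.commute)
    also have "\<dots> < obj + \<delta>" using lb' lpos by (simp add: divide_less_eq mult.commute algebra_simps)
    finally have "(\<Sum>x\<in>S. f x * w' x) < obj + \<delta>" .
    moreover have "(\<Sum>x\<in>S. f x * w x) \<le> (\<Sum>x\<in>S. f x * w' x)"
      using dopt wf' by (simp add: dual_optimizer_def)
    ultimately show ?thesis by simp
  qed
  have "(\<Sum>x\<in>S. f x * w x) \<le> obj" by (rule field_le_epsilon) (rule le)
  with ge show ?thesis by (simp add: obj_def)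
qed


lemma space_mu:
  assumes "Metric_space X d" "sets M = sets (metric_borel X d)"
  shows "space M = X"
  using sets_eq_imp_space_eq[OF assms(2)] space_metric_borel[OF assms(1)] by simp

lemma cont_meas_mu:
  assumes "Metric_space X d" "sets M = sets (metric_borel X d)"
    "continuous_map (Metric_space.mtopology X d) euclideanreal h"
  shows "h \<in> borel_measurable M"
  using cont_meas[OF assms(1,3)] measurable_cong_sets[OF assms(2) refl] by blast

lemma cont_bounded:
  assumes "compact_space (Metric_space.mtopology X d)" "Metric_space X d"
    "continuous_map (Metric_space.mtopology X d) euclideanreal h"
  shows "\<exists>G. \<forall>x\<in>X. \<bar>h x\<bar> \<le> G"
proof -
  have "compactin euclideanreal (h ` topspace (Metric_space.mtopology X d))"
    using assms(1,3) unfolding compact_space_def by (rule image_compactin)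
  then have "compact (h ` X)" using assms(2) by (simp add: Metric_space.topspace_mtopology)
  then have "bounded (h ` X)" by (rule compact_imp_bounded)
  then obtain a where "\<forall>y\<in>h ` X. norm y \<le> a" unfolding bounded_iff by blast
  then show ?thesis by auto
qed

lemma bssb_bounded:
  assumes "BSS_b X d M m g" "j \<in> {0..m}" "x \<in> X"
  shows "0 \<le> g j x \<and> g j x \<le> 1"
proof -
  obtain C where C: "bounded_polyhedral_cover X C" "vertex_interpolation_set X C m g"
    using assms(1) unfolding BSS_b_def by blast
  obtain vtx where g0: "\<And>j x. j\<in>{0..m} \<Longrightarrow> x\<in>X \<Longrightarrow> g j x \<ge> 0"
    and gs: "\<And>F x. F\<in>cover_faces C \<Longrightarrow> x\<in>F \<inter> X \<Longrightarrow> (\<Sum>j\<in>{j\<in>{0..m}. vtx j \<in> face_vertices F}. g j x) = 1"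
    and gz: "\<And>F j x. F\<in>cover_faces C \<Longrightarrow> j\<in>{0..m} \<Longrightarrow> vtx j \<notin> face_vertices F \<Longrightarrow> x\<in>F \<inter> X \<Longrightarrow> g j x = 0"
    using C(2) unfolding vertex_interpolation_set_def by blast
  obtain P where P: "P \<in> C" "x \<in> P" using C(1) assms(3) unfolding bounded_polyhedral_cover_def by blast
  have "polyhedron P" using C(1) P(1) unfolding bounded_polyhedral_cover_def by blast
  then have "P face_of P" by (intro face_of_refl polyhedron_imp_convex)
  then have PF: "P \<in> cover_faces C" using P(1) unfolding cover_faces_def by blast
  show ?thesis
  proof (cases "vtx j \<in> face_vertices P")
    case True
    have "g j x \<le> (\<Sum>j\<in>{j\<in>{0..m}. vtx j \<in> face_vertices P}. g j x)"
      using True assms(2,3) g0 by (intro member_le_sum) auto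
    then show ?thesis using gs[OF PF] P(2) assms g0 by auto
  next
    case False
    then show ?thesis using gz[OF PF assms(2) False] P(2) assms(3) by simp
  qed
qed

lemma g_props:
  assumes metric: "\<And>i. i < N \<Longrightarrow> Metric_space (X i) (d i)"
    and compact: "\<And>i. i < N \<Longrightarrow> compact_space (Metric_space.mtopology (X i) (d i))"
    and borel: "\<And>i. i < N \<Longrightarrow> sets (\<mu> i) = sets (metric_borel (X i) (d i))"
    and BSS: "(\<forall>i<N. BSS_a (X i) (d i) (\<mu> i) (m i) (g i)) \<or>
              (\<forall>i<N. BSS_b (X i) (d i) (\<mu> i) (m i) (g i))"
    and ij: "i < N" "j \<in> {1..m i}"
  shows "g i j \<in> borel_measurable (\<mu> i) \<and> (\<exists>G. \<forall>x\<in>X i. \<bar>g i j x\<bar> \<le> G)"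
  using BSS
proof
  assume "\<forall>i<N. BSS_a (X i) (d i) (\<mu> i) (m i) (g i)"
  then have c: "continuous_map (Metric_space.mtopology (X i) (d i)) euclideanreal (g i j)"
    using ij unfolding BSS_a_def by blast
  show ?thesis
    using cont_meas_mu[OF metric[OF ij(1)] borel[OF ij(1)] c] cont_bounded[OF compact[OF ij(1)] metric[OF ij(1)] c]
    by blast
next
  assume "\<forall>i<N. BSS_b (X i) (d i) (\<mu> i) (m i) (g i)"
  then have b: "BSS_b (X i) (d i) (\<mu> i) (m i) (g i)" using ij by blast
  then have "integral\<^sup>L (\<mu> i) (g i j) > 0" using ij unfolding BSS_b_def by auto
  then have "integrable (\<mu> i) (g i j)" using not_integrable_integral_eq by fastforce
  then have "g i j \<in> borel_measurable (\<mu> i)" by (rule borel_measurable_integrable)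
  moreover have "\<forall>x\<in>X i. \<bar>g i j x\<bar> \<le> 1" using bssb_bounded[OF b] ij by fastforce
  ultimately show ?thesis by blast
qed


lemma net_exists:
  fixes N :: nat and X :: "nat \<Rightarrow> 'a set" and d :: "nat \<Rightarrow> 'a \<Rightarrow> 'a \<Rightarrow> real"
  assumes metric: "\<And>i. i < N \<Longrightarrow> Metric_space (X i) (d i)"
    and compact: "\<And>i. i < N \<Longrightarrow> compact_space (Metric_space.mtopology (X i) (d i))"
    and e: "e > 0"
  shows "\<exists>D. finite D \<and> D \<subseteq> PiE {..<N} X \<and>
           (\<forall>x\<in>PiE {..<N} X. \<exists>q\<in>D. (\<Sum>i<N. d i (x i) (q i)) < e)"
proof -
  define e' where "e' = e / (real N + 1)"
  have e'pos: "e' > 0" using e by (simp add: e'_def)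
  have "\<forall>i. \<exists>K. i < N \<longrightarrow> finite K \<and> K \<subseteq> X i \<and> X i \<subseteq> (\<Union>x\<in>K. Metric_space.mball (X i) (d i) x e')"
  proof
    fix i show "\<exists>K. i < N \<longrightarrow> finite K \<and> K \<subseteq> X i \<and> X i \<subseteq> (\<Union>x\<in>K. Metric_space.mball (X i) (d i) x e')"
    proof (cases "i < N")
      case True
      have "Metric_space.mtotally_bounded (X i) (d i) (X i)"
        using iffD1[OF Metric_space.compact_space_eq_mcomplete_mtotally_bounded[OF metric[OF True]] compact[OF True]]
        by (rule conjunct2)
      then have "\<exists>K. finite K \<and> K \<subseteq> X i \<and> X i \<subseteq> (\<Union>x\<in>K. Metric_space.mball (X i) (d i) x e')"
        using e'pos by (simp add: Metric_space.mtotally_bounded_def[OF metric[OF True]])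
      then show ?thesis by simp
    qed simp
  qed
  then have "\<exists>Kf. \<forall>i. i < N \<longrightarrow> finite (Kf i) \<and> Kf i \<subseteq> X i \<and> X i \<subseteq> (\<Union>x\<in>Kf i. Metric_space.mball (X i) (d i) x e')"
    by (rule choice)
  then obtain Kf where Kf0: "\<forall>i. i < N \<longrightarrow> finite (Kf i) \<and> Kf i \<subseteq> X i \<and> X i \<subseteq> (\<Union>x\<in>Kf i. Metric_space.mball (X i) (d i) x e')"
    by blast
  then have Kf: "\<And>i. i < N \<Longrightarrow> finite (Kf i) \<and> Kf i \<subseteq> X i \<and> X i \<subseteq> (\<Union>x\<in>Kf i. Metric_space.mball (X i) (d i) x e')"
    by blast
  define D where "D = PiE {..<N} Kf"
  have finD: "finite D" unfolding D_def using Kf by (intro finite_PiE) auto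
  have subD: "D \<subseteq> PiE {..<N} X" unfolding D_def using Kf by (intro PiE_mono) auto
  have near: "\<exists>q\<in>D. (\<Sum>i<N. d i (x i) (q i)) < e" if x: "x \<in> PiE {..<N} X" for x
  proof -
    have "\<forall>i. \<exists>q. i < N \<longrightarrow> q \<in> Kf i \<and> d i (x i) q < e'"
    proof
      fix i show "\<exists>q. i < N \<longrightarrow> q \<in> Kf i \<and> d i (x i) q < e'"
      proof (cases "i < N")
        case True
        then have "x i \<in> X i" using x by auto
        then obtain q where q: "q \<in> Kf i" "x i \<in> Metric_space.mball (X i) (d i) q e'" using Kf[OF True] by blast
        then have "d i q (x i) < e'" using Metric_space.in_mball[OF metric[OF True]] by blast
        then have "d i (x i) q < e'" using Metric_space.commute[OF metric[OF True]] by metis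
        then show ?thesis using q by blast
      qed simp
    qed
    then have "\<exists>qf. \<forall>i. i < N \<longrightarrow> qf i \<in> Kf i \<and> d i (x i) (qf i) < e'" by (rule choice)
    then obtain qf where qf0: "\<forall>i. i < N \<longrightarrow> qf i \<in> Kf i \<and> d i (x i) (qf i) < e'" by blast
    then have qf: "\<And>i. i < N \<Longrightarrow> qf i \<in> Kf i \<and> d i (x i) (qf i) < e'" by blast
    define q where "q = restrict qf {..<N}"
    have qD: "q \<in> D" unfolding D_def q_def using qf by auto
    have "(\<Sum>i<N. d i (x i) (q i)) < e"
    proof (cases "N = 0")
      case True then show ?thesis using e by simp
    next
      case False
      have "(\<Sum>i<N. d i (x i) (q i)) < (\<Sum>i<N. e')"
        using False qf by (intro sum_strict_mono) (auto simp: q_def)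
      also have "\<dots> = real N * e'" by simp
      also have "\<dots> < e" unfolding e'_def using e by (simp add: field_simps)
      finally show ?thesis .
    qed
    then show ?thesis using qD by blast
  qed
  show ?thesis using finD subD near by (intro exI[of _ D]) blast
qed

lemma f_props:
  fixes f :: "(nat \<Rightarrow> 'a) \<Rightarrow> real"
  assumes metric: "\<And>i. i < N \<Longrightarrow> Metric_space (X i) (d i)"
    and compact: "\<And>i. i < N \<Longrightarrow> compact_space (Metric_space.mtopology (X i) (d i))"
    and borel: "\<And>i. i < N \<Longrightarrow> sets (\<mu> i) = sets (metric_borel (X i) (d i))"
    and L_pos: "L > 0"
    and lipschitz: "\<forall>x\<in>PiE {..<N} X. \<forall>x'\<in>PiE {..<N} X.
                     \<bar>f x - f x'\<bar> \<le> L * (\<Sum>i<N. d i (x i) (x' i))"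
  shows "f \<in> borel_measurable (PiM {..<N} \<mu>)" "\<exists>B. \<forall>x\<in>PiE {..<N} X. \<bar>f x\<bar> \<le> B"
proof -
  define \<rho> where "\<rho> x q = (\<Sum>i<N. d i (x i) (q i))" for x q :: "nat \<Rightarrow> 'a"
  have "\<forall>n. \<exists>D. finite D \<and> D \<subseteq> PiE {..<N} X \<and> (\<forall>x\<in>PiE {..<N} X. \<exists>q\<in>D. \<rho> x q < 1 / real (Suc n))"
  proof
    fix n
    show "\<exists>D. finite D \<and> D \<subseteq> PiE {..<N} X \<and> (\<forall>x\<in>PiE {..<N} X. \<exists>q\<in>D. \<rho> x q < 1 / real (Suc n))"
      unfolding \<rho>_def by (rule net_exists[OF metric compact]) auto
  qed
  then have "\<exists>Df. \<forall>n. finite (Df n) \<and> Df n \<subseteq> PiE {..<N} X \<and> (\<forall>x\<in>PiE {..<N} X. \<exists>q\<in>Df n. \<rho> x q < 1 / real (Suc n))"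
    by (rule choice)
  then obtain Df where Df0: "\<forall>n. finite (Df n) \<and> Df n \<subseteq> PiE {..<N} X \<and> (\<forall>x\<in>PiE {..<N} X. \<exists>q\<in>Df n. \<rho> x q < 1 / real (Suc n))"
    by blast
  then have Df: "\<And>n. finite (Df n)" "\<And>n. Df n \<subseteq> PiE {..<N} X"
    "\<And>n x. x \<in> PiE {..<N} X \<Longrightarrow> \<exists>q\<in>Df n. \<rho> x q < 1 / real (Suc n)" by blast+
  have spaceX: "space (PiM {..<N} \<mu>) = PiE {..<N} X"
    unfolding space_PiM using space_mu[OF metric borel] by (intro PiE_cong) auto
  have rho0: "\<rho> x q \<ge> 0" for x q unfolding \<rho>_def
    using Metric_space.nonneg[OF metric] by (intro sum_nonneg) auto
  define u where "u n x = Min ((\<lambda>q. f q + L * \<rho> x q) ` Df n)" for n x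
  have meas_rho: "(\<lambda>x. \<rho> x q) \<in> borel_measurable (PiM {..<N} \<mu>)" if q: "q \<in> PiE {..<N} X" for q
    unfolding \<rho>_def
  proof (intro borel_measurable_sum)
    fix i assume i: "i \<in> {..<N}"
    then have "q i \<in> X i" using q by auto
    then have "(\<lambda>z. d i z (q i)) \<in> borel_measurable (\<mu> i)"
      using i by (intro cont_meas_mu[OF metric borel] cont_dist[OF metric]) auto
    then show "(\<lambda>x. d i (x i) (q i)) \<in> borel_measurable (PiM {..<N} \<mu>)"
      using measurable_compose[OF measurable_component_singleton[OF i]] by blast
  qed
  have meas_u: "u n \<in> borel_measurable (PiM {..<N} \<mu>)" for n
  proof -
    have "(\<lambda>x. f q + L * \<rho> x q) \<in> borel_measurable (PiM {..<N} \<mu>)" if "q \<in> Df n" for q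
      using Df(2) that by (intro borel_measurable_add borel_measurable_times borel_measurable_const meas_rho) auto
    then show ?thesis unfolding u_def by (rule borel_measurable_Min[OF Df(1), where f="\<lambda>q x. f q + L * \<rho> x q"])
  qed
  have lower: "f x \<le> f q + L * \<rho> x q" if "x \<in> PiE {..<N} X" "q \<in> PiE {..<N} X" for x q
    using lipschitz that unfolding \<rho>_def by force
  have bnd: "f x \<le> u n x \<and> u n x \<le> f x + 2 * L / real (Suc n)" if x: "x \<in> PiE {..<N} X" for n x
  proof
    obtain q0 where q0: "q0 \<in> Df n" "\<rho> x q0 < 1 / real (Suc n)" using Df(3)[OF x] by blast
    show "f x \<le> u n x" unfolding u_def using Df(1,2) q0(1) lower[OF x] by (subst Min_ge_iff) blast+
    have "u n x \<le> f q0 + L * \<rho> x q0" unfolding u_def using Df(1) q0(1) by (intro Min_le) auto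
    also have "f q0 \<le> f x + L * \<rho> x q0" using lipschitz x Df(2) q0(1) unfolding \<rho>_def by force
    also have "L * \<rho> x q0 \<le> L * (1 / real (Suc n))" using q0(2) L_pos by (intro mult_left_mono) auto
    finally show "u n x \<le> f x + 2 * L / real (Suc n)" by simp
  qed
  show "f \<in> borel_measurable (PiM {..<N} \<mu>)"
  proof (rule borel_measurable_LIMSEQ_real[OF _ meas_u])
    fix x assume "x \<in> space (PiM {..<N} \<mu>)"
    then have x: "x \<in> PiE {..<N} X" using spaceX by simp
    have lim: "(\<lambda>n. f x + 2 * L * inverse (real (Suc n))) \<longlonglongrightarrow> f x + 2 * L * 0"
      by (intro tendsto_intros LIMSEQ_inverse_real_of_nat)
    show "(\<lambda>n. u n x) \<longlonglongrightarrow> f x"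
    proof (rule tendsto_sandwich[of "\<lambda>_. f x" _ _ "\<lambda>n. f x + 2 * L * inverse (real (Suc n))"])
      show "\<forall>\<^sub>F n in sequentially. f x \<le> u n x" using bnd[OF x] by simp
      show "\<forall>\<^sub>F n in sequentially. u n x \<le> f x + 2 * L * inverse (real (Suc n))"
        using bnd[OF x] by (simp add: divide_inverse)
      show "(\<lambda>n. f x + 2 * L * inverse (real (Suc n))) \<longlonglongrightarrow> f x" using lim by simp
    qed simp
  qed
  show "\<exists>B. \<forall>x\<in>PiE {..<N} X. \<bar>f x\<bar> \<le> B"
  proof (intro exI ballI)
    fix x assume x: "x \<in> PiE {..<N} X"
    obtain q0 where q0: "q0 \<in> Df 0" "\<rho> x q0 < 1" using Df(3)[OF x, of 0] by auto
    have "\<bar>f x - f q0\<bar> \<le> L * \<rho> x q0" using lipschitz x Df(2) q0(1) unfolding \<rho>_def by blast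
    also have "\<dots> \<le> L" using q0(2) L_pos by (simp add: mult_left_le)
    finally have "\<bar>f x\<bar> \<le> \<bar>f q0\<bar> + L" by simp
    also have "\<bar>f q0\<bar> \<le> Max ((\<lambda>q. \<bar>f q\<bar>) ` Df 0)" using Df(1) q0(1) by (intro Max_ge) auto
    finally show "\<bar>f x\<bar> \<le> Max ((\<lambda>q. \<bar>f q\<bar>) ` Df 0) + L" by simp
  qed
qed


lemma discrete_eq:
  assumes fin: "finite S" and sub: "S \<subseteq> space M"
  shows "discrete_measure M S w = distr (point_measure S (\<lambda>x. ennreal (w x))) M (\<lambda>x. x)"
proof -
  let ?P = "point_measure S (\<lambda>x. ennreal (w x))"
  let ?D = "distr ?P M (\<lambda>x. x)"
  have meas: "(\<lambda>x. x) \<in> measurable ?P M" using sub by auto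
  have spP: "space ?P = S" by (simp add: space_point_measure)
  have "?D = measure_of (space ?D) (sets ?D) (emeasure ?D)" by (rule measure_of_of_measure[symmetric])
  also have "\<dots> = measure_of (space M) (sets M) (emeasure ?D)" by simp
  also have "\<dots> = measure_of (space M) (sets M) (\<lambda>A. \<Sum>x\<in>S \<inter> A. ennreal (w x))"
  proof (rule measure_of_eq)
    show "sets M \<subseteq> Pow (space M)" by (rule sets.space_closed)
    fix a assume "a \<in> sigma_sets (space M) (sets M)"
    then have a: "a \<in> sets M" by (simp add: sets.sigma_sets_eq)
    have "emeasure ?D a = emeasure ?P ((\<lambda>x. x) -` a \<inter> space ?P)" by (rule emeasure_distr[OF meas a])
    also have "(\<lambda>x. x) -` a \<inter> space ?P = S \<inter> a" using spP by auto
    also have "emeasure ?P (S \<inter> a) = (\<Sum>x\<in>S \<inter> a. ennreal (w x))"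
      using fin by (intro emeasure_point_measure_finite) auto
    finally show "emeasure ?D a = (\<Sum>x\<in>S \<inter> a. ennreal (w x))" .
  qed
  finally show ?thesis unfolding discrete_measure_def ..
qed

lemma discrete_sets: "sets (discrete_measure M S w) = sets M"
  unfolding discrete_measure_def by (simp add: sets.sigma_sets_eq sets.space_closed)

lemma discrete_integral:
  fixes h :: "'b \<Rightarrow> real"
  assumes fin: "finite S" and sub: "S \<subseteq> space M" and w0: "\<And>x. x \<in> S \<Longrightarrow> w x \<ge> 0"
    and h: "h \<in> borel_measurable M"
  shows "integral\<^sup>L (discrete_measure M S w) h = (\<Sum>x\<in>S. w x * h x)"
proof -
  have meas: "(\<lambda>x. x) \<in> measurable (point_measure S (\<lambda>x. ennreal (w x))) M" using sub by auto
  have "integral\<^sup>L (discrete_measure M S w) h = integral\<^sup>L (point_measure S (\<lambda>x. ennreal (w x))) h"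
    unfolding discrete_eq[OF fin sub] integral_distr[OF meas h] ..
  also have "\<dots> = (\<Sum>x\<in>S. w x *\<^sub>R h x)"
    by (rule lebesgue_integral_point_measure_finite[OF fin]) (use w0 in auto)
  finally show ?thesis by simp
qed

lemma discrete_prob:
  assumes fin: "finite S" and sub: "S \<subseteq> space M" and w0: "\<And>x. x \<in> S \<Longrightarrow> w x \<ge> 0"
    and w1: "(\<Sum>x\<in>S. w x) = 1"
  shows "prob_space (discrete_measure M S w)"
proof
  let ?P = "point_measure S (\<lambda>x. ennreal (w x))"
  have meas: "(\<lambda>x. x) \<in> measurable ?P M" using sub by auto
  have "emeasure (discrete_measure M S w) (space (discrete_measure M S w))
      = emeasure (distr ?P M (\<lambda>x. x)) (space M)"
    unfolding discrete_eq[OF fin sub] by simp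
  also have "\<dots> = emeasure ?P ((\<lambda>x. x) -` space M \<inter> space ?P)" by (rule emeasure_distr[OF meas]) simp
  also have "(\<lambda>x. x) -` space M \<inter> space ?P = S" using sub by (auto simp: space_point_measure)
  also have "emeasure ?P S = (\<Sum>x\<in>S. ennreal (w x))" using fin by (intro emeasure_point_measure_finite) auto
  also have "\<dots> = ennreal (\<Sum>x\<in>S. w x)" using w0 by simp
  finally show "emeasure (discrete_measure M S w) (space (discrete_measure M S w)) = 1" using w1 by simp
qed

lemma marginal_integral:
  fixes h :: "'a \<Rightarrow> real"
  assumes "sets \<nu> = sets (PiM {..<N} \<mu>)" "i < N" "h \<in> borel_measurable (\<mu> i)"
  shows "integral\<^sup>L (distr \<nu> (\<mu> i) (\<lambda>x. x i)) h = integral\<^sup>L \<nu> (\<lambda>x. h (x i))"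
proof -
  have "(\<lambda>x. x i) \<in> measurable (PiM {..<N} \<mu>) (\<mu> i)" using assms(2) by (intro measurable_component_singleton) auto
  then have m: "(\<lambda>x. x i) \<in> measurable \<nu> (\<mu> i)" using measurable_cong_sets[OF assms(1) refl] by blast
  show ?thesis by (rule integral_distr[OF m assms(3)])
qed


lemma Jset_iff: "(i,j) \<in> Jset N m \<longleftrightarrow> i < N \<and> j \<in> {1..m i}"
  by (auto simp: Jset_def)

lemma gamma_lower:
  fixes f :: "(nat \<Rightarrow> 'a) \<Rightarrow> real"
  assumes nu: "\<nu> \<in> Gamma N m \<mu> g"
    and sp: "space (PiM {..<N} \<mu>) = PiE {..<N} X"
    and fmeas: "f \<in> borel_measurable (PiM {..<N} \<mu>)" and fB: "\<forall>x\<in>PiE {..<N} X. \<bar>f x\<bar> \<le> B"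
    and gmeas: "\<And>i j. (i,j) \<in> Jset N m \<Longrightarrow> g i j \<in> borel_measurable (\<mu> i)"
    and gB: "\<And>i j x. (i,j) \<in> Jset N m \<Longrightarrow> x \<in> X i \<Longrightarrow> \<bar>g i j x\<bar> \<le> G"
    and feas: "lp_feasible N m g f (PiE {..<N} X) y0 y"
  shows "lp_obj N m \<mu> g y0 y \<le> integral\<^sup>L \<nu> f"
proof -
  have P: "prob_space \<nu>" and sets: "sets \<nu> = sets (PiM {..<N} \<mu>)"
    and marg: "\<And>i j. i < N \<Longrightarrow> j \<in> {1..m i} \<Longrightarrow> integral\<^sup>L (distr \<nu> (\<mu> i) (\<lambda>x. x i)) (g i j) = integral\<^sup>L (\<mu> i) (g i j)"
    using nu unfolding Gamma_def by auto
  interpret prob_space \<nu> by (rule P)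
  have spn: "space \<nu> = PiE {..<N} X" using sets_eq_imp_space_eq[OF sets] sp by simp
  have gi_meas: "(\<lambda>x. g i j (x i)) \<in> borel_measurable \<nu>" if p: "(i,j) \<in> Jset N m" for i j
  proof -
    have i: "i \<in> {..<N}" using p by (simp add: Jset_iff)
    have "(\<lambda>x. g i j (x i)) \<in> borel_measurable (PiM {..<N} \<mu>)"
      using measurable_compose[OF measurable_component_singleton[OF i, where M=\<mu>] gmeas[OF p]] by simp
    then show ?thesis using measurable_cong_sets[OF sets refl] by blast
  qed
  have gi_int: "integrable \<nu> (\<lambda>x. g i j (x i) * c)" if p: "(i,j) \<in> Jset N m" for i j c
  proof -
    have "integrable \<nu> (\<lambda>x. g i j (x i))"
    proof (rule integrable_const_bound[where B=G])
      show "AE x in \<nu>. norm (g i j (x i)) \<le> G"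
        using p gB spn by (intro AE_I2) (auto simp: Jset_iff PiE_iff)
    qed (rule gi_meas[OF p])
    then show ?thesis by simp
  qed
  have gi_integral: "integral\<^sup>L \<nu> (\<lambda>x. g i j (x i)) = gbar \<mu> g i j" if p: "(i,j) \<in> Jset N m" for i j
  proof -
    have i: "i < N" "j \<in> {1..m i}" using p by (auto simp: Jset_iff)
    have "integral\<^sup>L \<nu> (\<lambda>x. g i j (x i)) = integral\<^sup>L (distr \<nu> (\<mu> i) (\<lambda>x. x i)) (g i j)"
      by (rule marginal_integral[OF sets i(1) gmeas[OF p], symmetric])
    also have "\<dots> = gbar \<mu> g i j" using marg[OF i] by (simp add: gbar_def)
    finally show ?thesis .
  qed
  have fint: "integrable \<nu> f"
  proof (rule integrable_const_bound[where B=B])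
    show "AE x in \<nu>. norm (f x) \<le> B" using fB spn by (intro AE_I2) auto
    show "f \<in> borel_measurable \<nu>" using fmeas measurable_cong_sets[OF sets refl] by blast
  qed
  have sint: "integrable \<nu> (\<lambda>x. \<Sum>p\<in>Jset N m. (case p of (i,j) \<Rightarrow> g i j (x i) * y (i,j)))"
    by (intro Bochner_Integration.integrable_sum) (use gi_int in \<open>auto split: prod.splits\<close>)
  have "integral\<^sup>L \<nu> (\<lambda>x. y0 + gdot N m g x y) = y0 + integral\<^sup>L \<nu> (\<lambda>x. \<Sum>p\<in>Jset N m. (case p of (i,j) \<Rightarrow> g i j (x i) * y (i,j)))"
    unfolding gdot_def using sint by (simp add: prob_space)
  also have "integral\<^sup>L \<nu> (\<lambda>x. \<Sum>p\<in>Jset N m. (case p of (i,j) \<Rightarrow> g i j (x i) * y (i,j)))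
      = (\<Sum>p\<in>Jset N m. integral\<^sup>L \<nu> (\<lambda>x. case p of (i,j) \<Rightarrow> g i j (x i) * y (i,j)))"
    by (rule Bochner_Integration.integral_sum) (use gi_int in \<open>auto split: prod.splits\<close>)
  also have "\<dots> = (\<Sum>(i,j)\<in>Jset N m. gbar \<mu> g i j * y (i,j))"
  proof (rule sum.cong)
    fix p assume p: "p \<in> Jset N m"
    obtain i j where pij: "p = (i,j)" by (metis surj_pair)
    have "integral\<^sup>L \<nu> (\<lambda>x. g i j (x i) * y (i,j)) = gbar \<mu> g i j * y (i,j)"
      using gi_integral[of i j] p pij by simp
    then show "integral\<^sup>L \<nu> (\<lambda>x. case p of (i,j) \<Rightarrow> g i j (x i) * y (i,j)) = (case p of (i,j) \<Rightarrow> gbar \<mu> g i j * y (i,j))"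
      using pij by simp
  qed simp
  finally have eq: "integral\<^sup>L \<nu> (\<lambda>x. y0 + gdot N m g x y) = lp_obj N m \<mu> g y0 y"
    by (simp add: lp_obj_def)
  have "integral\<^sup>L \<nu> (\<lambda>x. y0 + gdot N m g x y) \<le> integral\<^sup>L \<nu> f"
  proof (rule integral_mono[OF _ fint])
    show "integrable \<nu> (\<lambda>x. y0 + gdot N m g x y)" unfolding gdot_def using sint by simp
    show "y0 + gdot N m g x y \<le> f x" if "x \<in> space \<nu>" for x
      using feas that spn by (simp add: lp_feasible_def)
  qed
  then show ?thesis using eq by simp
qed


lemma floor_close:
  fixes a b \<delta> :: real
  assumes "\<lfloor>a / \<delta>\<rfloor> = \<lfloor>b / \<delta>\<rfloor>" "\<delta> > 0"
  shows "\<bar>a - b\<bar> < \<delta>"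
proof -
  have "\<bar>a / \<delta> - b / \<delta>\<bar> < 1"
    using assms(1) of_int_floor_le[of "a/\<delta>"] of_int_floor_le[of "b/\<delta>"]
      real_of_int_floor_add_one_gt[of "a/\<delta>"] real_of_int_floor_add_one_gt[of "b/\<delta>"] by linarith
  then have h: "(a - b) / \<delta> < 1" "-1 < (a - b) / \<delta>" by (simp_all add: diff_divide_distrib abs_less_iff)
  have "a - b < \<delta>" using h(1) assms(2) by (simp add: pos_divide_less_eq)
  moreover have "-\<delta> < a - b" using h(2) assms(2) by (simp add: pos_less_divide_eq)
  ultimately show ?thesis by (simp add: abs_less_iff)
qed

lemma floor_range:
  fixes a B \<delta> :: real
  assumes "\<bar>a\<bar> \<le> B" "\<delta> > 0"
  shows "\<lfloor>a / \<delta>\<rfloor> \<in> {-\<lceil>B / \<delta>\<rceil>..\<lceil>B / \<delta>\<rceil>}"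
proof -
  have "(-B) / \<delta> \<le> a / \<delta>" using assms by (intro divide_right_mono) (auto simp: abs_le_iff)
  moreover have "a / \<delta> \<le> B / \<delta>" using assms by (intro divide_right_mono) (auto simp: abs_le_iff)
  ultimately have "\<lfloor>(-B) / \<delta>\<rfloor> \<le> \<lfloor>a / \<delta>\<rfloor>" "\<lfloor>a / \<delta>\<rfloor> \<le> \<lfloor>B / \<delta>\<rfloor>" by (auto intro: floor_mono)
  moreover have "\<lfloor>(-B) / \<delta>\<rfloor> = -\<lceil>B / \<delta>\<rceil>" by (simp add: ceiling_def)
  moreover have "\<lfloor>B / \<delta>\<rfloor> \<le> \<lceil>B / \<delta>\<rceil>" by (rule floor_le_ceiling)
  ultimately have "-\<lceil>B / \<delta>\<rceil> \<le> \<lfloor>a / \<delta>\<rfloor>" "\<lfloor>a / \<delta>\<rfloor> \<le> \<lceil>B / \<delta>\<rceil>" by linarith+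
  then show ?thesis by simp
qed

lemma no_infinite_separated:
  fixes y0 :: "nat \<Rightarrow> real" and y :: "nat \<Rightarrow> 'p \<Rightarrow> real"
  assumes finJ: "finite J" and G: "G \<ge> 0" and eps: "\<epsilon> > 0"
    and bnd: "\<And>r. \<bar>y0 r\<bar> \<le> B \<and> (\<forall>p\<in>J. \<bar>y r p\<bar> \<le> B)"
    and sep: "\<And>r r'. r < r' \<Longrightarrow> \<epsilon> < \<bar>y0 r - y0 r'\<bar> + G * (\<Sum>p\<in>J. \<bar>y r p - y r' p\<bar>)"
  shows False
proof -
  define \<delta> where "\<delta> = \<epsilon> / (1 + G * real (card J))"
  have dpos: "\<delta> > 0" unfolding \<delta>_def using eps G by (simp add: add_pos_nonneg)
  define K where "K = \<lceil>B / \<delta>\<rceil>"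
  define key where "key r = (\<lfloor>y0 r / \<delta>\<rfloor>, restrict (\<lambda>p. \<lfloor>y r p / \<delta>\<rfloor>) J)" for r
  have "key ` UNIV \<subseteq> {-K..K} \<times> PiE J (\<lambda>_. {-K..K})"
  proof
    fix k assume "k \<in> key ` UNIV"
    then obtain r where r: "k = key r" by blast
    have "\<lfloor>y0 r / \<delta>\<rfloor> \<in> {-K..K}" unfolding K_def using floor_range[OF conjunct1[OF bnd[of r]] dpos] .
    moreover have "restrict (\<lambda>p. \<lfloor>y r p / \<delta>\<rfloor>) J \<in> PiE J (\<lambda>_. {-K..K})"
      unfolding K_def restrict_PiE_iff
    proof
      fix p assume "p \<in> J"
      then have "\<bar>y r p\<bar> \<le> B" using bnd by blast
      then show "\<lfloor>y r p / \<delta>\<rfloor> \<in> {-\<lceil>B / \<delta>\<rceil>..\<lceil>B / \<delta>\<rceil>}" by (rule floor_range[OF _ dpos])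
    qed
    ultimately show "k \<in> {-K..K} \<times> PiE J (\<lambda>_. {-K..K})" using r key_def by simp
  qed
  moreover have "finite ({-K..K} \<times> PiE J (\<lambda>_. {-K..K}))" using finJ by (intro finite_cartesian_product finite_PiE) auto
  ultimately have "\<not> inj key"
  proof (intro notI)
    assume a: "key ` UNIV \<subseteq> {-K..K} \<times> PiE J (\<lambda>_. {-K..K})" "finite ({-K..K} \<times> PiE J (\<lambda>_. {-K..K}))" "inj key"
    have "finite (UNIV :: nat set)" by (rule inj_on_finite[OF a(3) a(1) a(2)])
    then show False by simp
  qed
  then have "\<exists>r r'. key r = key r' \<and> r \<noteq> r'" unfolding inj_def by blast
  then obtain r r' where rr: "key r = key r'" "r \<noteq> r'" by blast
  have close: "\<bar>y0 a - y0 b\<bar> + G * (\<Sum>p\<in>J. \<bar>y a p - y b p\<bar>) < \<epsilon>" if kab: "key a = key b" for a b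
  proof -
    have f0: "\<lfloor>y0 a / \<delta>\<rfloor> = \<lfloor>y0 b / \<delta>\<rfloor>" using kab by (simp add: key_def)
    have fp: "\<lfloor>y a p / \<delta>\<rfloor> = \<lfloor>y b p / \<delta>\<rfloor>" if "p \<in> J" for p
    proof -
      have "restrict (\<lambda>p. \<lfloor>y a p / \<delta>\<rfloor>) J p = restrict (\<lambda>p. \<lfloor>y b p / \<delta>\<rfloor>) J p" using kab by (simp add: key_def)
      then show ?thesis using that by simp
    qed
    have c0: "\<bar>y0 a - y0 b\<bar> < \<delta>" by (rule floor_close[OF f0 dpos])
    have "(\<Sum>p\<in>J. \<bar>y a p - y b p\<bar>) \<le> real (card J) * \<delta>"
      using floor_close[OF fp dpos] by (intro sum_bounded_above[where K=\<delta>, simplified]) (auto intro: less_imp_le)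
    then have "G * (\<Sum>p\<in>J. \<bar>y a p - y b p\<bar>) \<le> G * (real (card J) * \<delta>)" using G by (rule mult_left_mono)
    then have "\<bar>y0 a - y0 b\<bar> + G * (\<Sum>p\<in>J. \<bar>y a p - y b p\<bar>) < \<delta> + G * (real (card J) * \<delta>)" using c0 by linarith
    also have "\<delta> + G * (real (card J) * \<delta>) = \<epsilon>"
    proof -
      have "1 + G * real (card J) > 0" using G by (simp add: add_pos_nonneg)
      then have pos: "1 + G * real (card J) \<noteq> 0" by simp
      have "\<delta> + G * (real (card J) * \<delta>) = \<delta> * (1 + G * real (card J))" by (simp add: algebra_simps)
      also have "\<dots> = \<epsilon>" unfolding \<delta>_def using pos by simp
      finally show ?thesis .
    qed
    finally show ?thesis .
  qed
  show False
  proof (cases "r < r'")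
    case True then show False using sep[OF True] close[OF rr(1)] by linarith
  next
    case False
    then have "r' < r" using rr(2) by simp
    moreover have "\<bar>y0 r' - y0 r\<bar> + G * (\<Sum>p\<in>J. \<bar>y r' p - y r p\<bar>) < \<epsilon>" by (rule close[OF rr(1)[symmetric]])
    ultimately show False using sep[of r' r] by linarith
  qed
qed


theorem proposition4p8:
  fixes N :: nat
    and X :: "nat \<Rightarrow> 'a::euclidean_space set"
    and d :: "nat \<Rightarrow> 'a \<Rightarrow> 'a \<Rightarrow> real"
    and \<mu> :: "nat \<Rightarrow> 'a measure"
    and f :: "(nat \<Rightarrow> 'a) \<Rightarrow> real"
    and L :: real
    and m :: "nat \<Rightarrow> nat"
    and g :: "nat \<Rightarrow> nat \<Rightarrow> 'a \<Rightarrow> real"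
    and Xd0 :: "(nat \<Rightarrow> 'a) set"
    and Orcl :: "(nat \<times> nat \<Rightarrow> real) \<Rightarrow> (nat \<Rightarrow> 'a) \<times> real"
    and \<epsilon> :: real
    and Xd :: "nat \<Rightarrow> (nat \<Rightarrow> 'a) set"
    and y0 :: "nat \<Rightarrow> real"
    and y :: "nat \<Rightarrow> nat \<times> nat \<Rightarrow> real"
    and w :: "nat \<Rightarrow> (nat \<Rightarrow> 'a) \<Rightarrow> real"
  assumes metric: "\<And>i. i < N \<Longrightarrow> Metric_space (X i) (d i)"
    and compact: "\<And>i. i < N \<Longrightarrow> compact_space (Metric_space.mtopology (X i) (d i))"
    and prob: "\<And>i. i < N \<Longrightarrow> prob_space (\<mu> i)"
    and borel: "\<And>i. i < N \<Longrightarrow> sets (\<mu> i) = sets (metric_borel (X i) (d i))"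
    and L_pos: "L > 0"
    and lipschitz: "\<forall>x\<in>PiE {..<N} X. \<forall>x'\<in>PiE {..<N} X.
                     \<bar>f x - f x'\<bar> \<le> L * (\<Sum>i<N. d i (x i) (x' i))"
    and BSS: "(\<forall>i<N. BSS_a (X i) (d i) (\<mu> i) (m i) (g i)) \<or>
              (\<forall>i<N. BSS_b (X i) (d i) (\<mu> i) (m i) (g i))"
    and Xd0: "finite Xd0" "Xd0 \<subseteq> PiE {..<N} X"
    and superlevel: "lp_bounded_superlevel N m \<mu> g f Xd0"
    and Orcl: "\<And>z. fst (Orcl z) \<in> PiE {..<N} X \<and>
                   (\<forall>x\<in>PiE {..<N} X. f (fst (Orcl z)) - gdot N m g (fst (Orcl z)) z
                                       \<le> f x - gdot N m g x z) \<and>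
                   snd (Orcl z) = f (fst (Orcl z)) - gdot N m g (fst (Orcl z)) z"
    and eps_pos: "\<epsilon> > 0"
    and run_init: "Xd 0 = Xd0"
    and run_lp: "\<And>r. (\<forall>r'<r. y0 r' - snd (Orcl (y r')) > \<epsilon>) \<Longrightarrow>
                   lp_optimizer N m \<mu> g f (Xd r) (y0 r) (y r)"
    and run_dual: "\<And>r. (\<forall>r'<r. y0 r' - snd (Orcl (y r')) > \<epsilon>) \<Longrightarrow>
                   dual_optimizer N m \<mu> g f (Xd r) (w r)"
    and run_cut: "\<And>r. (\<forall>r'<r. y0 r' - snd (Orcl (y r')) > \<epsilon>) \<Longrightarrow>
                   y0 r - snd (Orcl (y r)) > \<epsilon> \<Longrightarrow>
                   (\<exists>Xs. finite Xs \<and> Xs \<subseteq> PiE {..<N} X \<and> fst (Orcl (y r)) \<in> Xs \<and>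
                         Xd (Suc r) = Xd r \<union> Xs)"
  shows "\<exists>r. (\<forall>r'<r. y0 r' - snd (Orcl (y r')) > \<epsilon>) \<and> y0 r - snd (Orcl (y r)) \<le> \<epsilon> \<and>
     (let s = snd (Orcl (y r));
          \<alpha>UB = lp_obj N m \<mu> g (y0 r) (y r);
          \<alpha>LB = lp_obj N m \<mu> g (y0 r) (y r) - y0 r + s;
          LSIP = lp_value N m \<mu> g f (PiE {..<N} X);
          hat_y0 = s;
          hat_y = y r;
          hat_\<mu> = discrete_measure (PiM {..<N} \<mu>) (Xd r) (w r);
          MOT = mot_value N m \<mu> g f
      in \<alpha>LB \<le> LSIP \<and> LSIP \<le> \<alpha>UB \<and> \<alpha>UB - \<alpha>LB \<le> \<epsilon> \<and>
         lp_feasible N m g f (PiE {..<N} X) hat_y0 hat_y \<and>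
         \<bar>LSIP - lp_obj N m \<mu> g hat_y0 hat_y\<bar> \<le> \<epsilon> \<and>
         lp_obj N m \<mu> g hat_y0 hat_y = \<alpha>LB \<and>
         hat_\<mu> \<in> Gamma N m \<mu> g \<and>
         \<bar>integral\<^sup>L hat_\<mu> f - MOT\<bar> \<le> \<epsilon> \<and>
         integral\<^sup>L hat_\<mu> f = \<alpha>UB)"
proof -
  let ?PX = "PiE {..<N} X"
  let ?J = "Jset N m"
  have OA: "fst (Orcl z) \<in> ?PX" for z using conjunct1[OF Orcl[of z]] .
  have OB: "\<forall>x\<in>?PX. f (fst (Orcl z)) - gdot N m g (fst (Orcl z)) z \<le> f x - gdot N m g x z" for z
    using conjunct1[OF conjunct2[OF Orcl[of z]]] .
  have OC: "snd (Orcl z) = f (fst (Orcl z)) - gdot N m g (fst (Orcl z)) z" for z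
    using conjunct2[OF conjunct2[OF Orcl[of z]]] .
  have gp: "g i j \<in> borel_measurable (\<mu> i) \<and> (\<exists>G. \<forall>x\<in>X i. \<bar>g i j x\<bar> \<le> G)" if "(i,j) \<in> ?J" for i j
    using g_props[OF metric compact borel BSS] that by (simp add: Jset_iff)
  have "\<forall>p\<in>?J. \<exists>G. \<forall>x\<in>X (fst p). \<bar>g (fst p) (snd p) x\<bar> \<le> G"
  proof
    fix p assume "p \<in> ?J"
    then have "(fst p, snd p) \<in> ?J" by simp
    then show "\<exists>G. \<forall>x\<in>X (fst p). \<bar>g (fst p) (snd p) x\<bar> \<le> G" using gp by blast
  qed
  then have "\<exists>Gf. \<forall>p\<in>?J. \<forall>x\<in>X (fst p). \<bar>g (fst p) (snd p) x\<bar> \<le> Gf p" by (rule bchoice)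
  then obtain Gf where Gf: "\<forall>p\<in>?J. \<forall>x\<in>X (fst p). \<bar>g (fst p) (snd p) x\<bar> \<le> Gf p" by blast
  define G where "G = (\<Sum>p\<in>?J. \<bar>Gf p\<bar>)"
  have G0: "G \<ge> 0" unfolding G_def by (intro sum_nonneg) auto
  have gB: "\<bar>g i j x\<bar> \<le> G" if "(i,j) \<in> ?J" "x \<in> X i" for i j x
  proof -
    have "\<bar>g i j x\<bar> \<le> Gf (i,j)" using Gf that by fastforce
    also have "\<dots> \<le> \<bar>Gf (i,j)\<bar>" by simp
    also have "\<dots> \<le> G" unfolding G_def using that(1) finite_Jset
      by (intro member_le_sum[where f="\<lambda>p. \<bar>Gf p\<bar>"]) auto
    finally show ?thesis .
  qed
  have gmeas: "g i j \<in> borel_measurable (\<mu> i)" if "(i,j) \<in> ?J" for i j using gp[OF that] by blast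
  have fmeas: "f \<in> borel_measurable (PiM {..<N} \<mu>)"
    using f_props(1)[OF metric compact borel L_pos lipschitz] .
  obtain Bf where fB: "\<forall>x\<in>?PX. \<bar>f x\<bar> \<le> Bf"
    using f_props(2)[OF metric compact borel L_pos lipschitz] by blast
  have sp: "space (PiM {..<N} \<mu>) = ?PX"
    unfolding space_PiM using space_mu[OF metric borel] by (intro PiE_cong) auto
  define x0 where "x0 = fst (Orcl (\<lambda>_. 0))"
  have gdot0: "gdot N m g x (\<lambda>_. 0) = 0" for x by (simp add: gdot_def)
  have o0: "x0 \<in> ?PX" "\<forall>x\<in>?PX. f x0 - gdot N m g x0 (\<lambda>_. 0) \<le> f x - gdot N m g x (\<lambda>_. 0)"
    using OA[of "\<lambda>_. 0"] OB[of "\<lambda>_. 0"] unfolding x0_def by auto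
  have x0: "x0 \<in> ?PX" "\<And>x. x \<in> ?PX \<Longrightarrow> f x0 \<le> f x"
    using o0 gdot0 by simp_all
  have Xd_facts: "Xd0 \<subseteq> Xd r \<and> Xd r \<subseteq> ?PX \<and> finite (Xd r)"
    if "\<forall>r'<r. y0 r' - snd (Orcl (y r')) > \<epsilon>" for r
    using that
  proof (induction r)
    case 0
    then show ?case using run_init Xd0 by simp
  next
    case (Suc r)
    then have h1: "\<forall>r'<r. y0 r' - snd (Orcl (y r')) > \<epsilon>" and h2: "y0 r - snd (Orcl (y r)) > \<epsilon>" by auto
    obtain Xs where Xs: "finite Xs" "Xs \<subseteq> ?PX" "Xd (Suc r) = Xd r \<union> Xs" using run_cut[OF h1 h2] by blast
    then show ?case using Suc.IH[OF h1] by auto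
  qed
  have objlb: "f x0 \<le> lp_obj N m \<mu> g (y0 r) (y r)" if h: "\<forall>r'<r. y0 r' - snd (Orcl (y r')) > \<epsilon>" for r
  proof -
    have "lp_feasible N m g f (Xd r) (f x0) (\<lambda>_. 0)"
      unfolding lp_feasible_def using x0(2) Xd_facts[OF h] gdot0 by auto
    then have "lp_obj N m \<mu> g (f x0) (\<lambda>_. 0) \<le> lp_obj N m \<mu> g (y0 r) (y r)"
      using run_lp[OF h] by (simp add: lp_optimizer_def)
    then show ?thesis by (simp add: lp_obj_def)
  qed
  have terminates: "\<exists>r. y0 r - snd (Orcl (y r)) \<le> \<epsilon>"
  proof (rule ccontr)
    assume "\<not> (\<exists>r. y0 r - snd (Orcl (y r)) \<le> \<epsilon>)"
    then have all: "\<And>r. y0 r - snd (Orcl (y r)) > \<epsilon>" by (simp add: not_le)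
    then have hyp: "\<And>r. \<forall>r'<r. y0 r' - snd (Orcl (y r')) > \<epsilon>" by blast
    obtain B where B: "\<forall>z0 z. lp_feasible N m g f Xd0 z0 z \<and> lp_obj N m \<mu> g z0 z \<ge> f x0 \<longrightarrow>
          \<bar>z0\<bar> \<le> B \<and> (\<forall>p\<in>?J. \<bar>z p\<bar> \<le> B)"
    proof -
      have "\<exists>B. \<forall>z0 z. lp_feasible N m g f Xd0 z0 z \<and> lp_obj N m \<mu> g z0 z \<ge> f x0 \<longrightarrow>
          \<bar>z0\<bar> \<le> B \<and> (\<forall>p\<in>?J. \<bar>z p\<bar> \<le> B)"
        using superlevel unfolding lp_bounded_superlevel_def by (rule spec)
      then show ?thesis using that by blast
    qed
    have bnd: "\<bar>y0 r\<bar> \<le> B \<and> (\<forall>p\<in>?J. \<bar>y r p\<bar> \<le> B)" for r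
    proof -
      have "lp_feasible N m g f (Xd r) (y0 r) (y r)" using run_lp[OF hyp] by (simp add: lp_optimizer_def)
      then have "lp_feasible N m g f Xd0 (y0 r) (y r)" using Xd_facts[OF hyp[of r]] unfolding lp_feasible_def by blast
      then show ?thesis using B[rule_format, of "y0 r" "y r"] objlb[OF hyp[of r]] by blast
    qed
    have step: "Xd r \<subseteq> Xd (Suc r) \<and> fst (Orcl (y r)) \<in> Xd (Suc r)" for r
    proof -
      obtain Xs where "finite Xs" "Xs \<subseteq> ?PX" "fst (Orcl (y r)) \<in> Xs" "Xd (Suc r) = Xd r \<union> Xs"
        using run_cut[OF hyp[of r] all[of r]] by blast
      then show ?thesis by simp
    qed
    have mono: "Xd r \<subseteq> Xd r'" if "r \<le> r'" for r r'
      using step by (intro lift_Suc_mono_le[of Xd, OF _ that]) blast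
    have sep: "\<epsilon> < \<bar>y0 r - y0 r'\<bar> + G * (\<Sum>p\<in>?J. \<bar>y r p - y r' p\<bar>)" if rr: "r < r'" for r r'
    proof -
      define xr where "xr = fst (Orcl (y r))"
      have xrX: "xr \<in> ?PX" using OA[of "y r"] unfolding xr_def .
      have "xr \<in> Xd (Suc r)" using step[of r] by (simp add: xr_def)
      moreover have "Xd (Suc r) \<subseteq> Xd r'" using rr by (intro mono) simp
      ultimately have "xr \<in> Xd r'" by blast
      then have f1: "y0 r' + gdot N m g xr (y r') \<le> f xr"
        using run_lp[OF hyp[of r']] by (simp add: lp_optimizer_def lp_feasible_def)
      have "snd (Orcl (y r)) = f xr - gdot N m g xr (y r)" using OC[of "y r"] unfolding xr_def .
      then have f2: "y0 r - (f xr - gdot N m g xr (y r)) > \<epsilon>"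
        using all[of r] by simp
      have "gdot N m g xr (y r) - gdot N m g xr (y r') = (\<Sum>p\<in>?J. g (fst p) (snd p) (xr (fst p)) * y r p - g (fst p) (snd p) (xr (fst p)) * y r' p)"
        unfolding gdot_def split_def prod.collapse by (rule sum_subtractf[symmetric])
      also have "\<dots> = (\<Sum>p\<in>?J. g (fst p) (snd p) (xr (fst p)) * (y r p - y r' p))"
        by (simp only: right_diff_distrib)
      also have "\<dots> \<le> (\<Sum>p\<in>?J. G * \<bar>y r p - y r' p\<bar>)"
      proof (rule sum_mono)
        fix p assume p: "p \<in> ?J"
        have "(fst p, snd p) \<in> ?J" using p by simp
        moreover have "xr (fst p) \<in> X (fst p)"
        proof -
          have "fst p \<in> {..<N}" using p by (auto simp: Jset_def)
          then show ?thesis using xrX by (rule PiE_mem[rotated])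
        qed
        ultimately have gb: "\<bar>g (fst p) (snd p) (xr (fst p))\<bar> \<le> G" by (rule gB)
        have "g (fst p) (snd p) (xr (fst p)) * (y r p - y r' p) \<le> \<bar>g (fst p) (snd p) (xr (fst p)) * (y r p - y r' p)\<bar>"
          by (rule abs_ge_self)
        also have "\<dots> = \<bar>g (fst p) (snd p) (xr (fst p))\<bar> * \<bar>y r p - y r' p\<bar>" by (rule abs_mult)
        also have "\<dots> \<le> G * \<bar>y r p - y r' p\<bar>" using gb by (intro mult_right_mono) auto
        finally show "g (fst p) (snd p) (xr (fst p)) * (y r p - y r' p) \<le> G * \<bar>y r p - y r' p\<bar>" .
      qed
      also have "\<dots> = G * (\<Sum>p\<in>?J. \<bar>y r p - y r' p\<bar>)" by (simp add: sum_distrib_left)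
      finally have "gdot N m g xr (y r) - gdot N m g xr (y r') \<le> G * (\<Sum>p\<in>?J. \<bar>y r p - y r' p\<bar>)" .
      then show ?thesis using f1 f2 by linarith
    qed
    show False by (rule no_infinite_separated[OF finite_Jset G0 eps_pos bnd sep])
  qed
  define r where "r = (LEAST r. y0 r - snd (Orcl (y r)) \<le> \<epsilon>)"
  have stop: "y0 r - snd (Orcl (y r)) \<le> \<epsilon>"
    unfolding r_def by (rule LeastI_ex[OF terminates])
  have prev: "\<forall>r'<r. y0 r' - snd (Orcl (y r')) > \<epsilon>"
  proof (intro allI impI)
    fix r' assume "r' < r"
    then have "\<not> (y0 r' - snd (Orcl (y r')) \<le> \<epsilon>)" unfolding r_def by (rule not_less_Least)
    then show "y0 r' - snd (Orcl (y r')) > \<epsilon>" by simp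
  qed
  have Xdr: "Xd0 \<subseteq> Xd r" "Xd r \<subseteq> ?PX" "finite (Xd r)" using Xd_facts[OF prev] by auto
  have opt: "lp_optimizer N m \<mu> g f (Xd r) (y0 r) (y r)" by (rule run_lp[OF prev])
  have dopt: "dual_optimizer N m \<mu> g f (Xd r) (w r)" by (rule run_dual[OF prev])
  define sr where "sr = snd (Orcl (y r))"
  define \<alpha>UB where "\<alpha>UB = lp_obj N m \<mu> g (y0 r) (y r)"
  define \<alpha>LB where "\<alpha>LB = lp_obj N m \<mu> g (y0 r) (y r) - y0 r + sr"
  define LSIP where "LSIP = lp_value N m \<mu> g f ?PX"
  define h\<mu> where "h\<mu> = discrete_measure (PiM {..<N} \<mu>) (Xd r) (w r)"
  define MOT where "MOT = mot_value N m \<mu> g f"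
  have hatfeas: "lp_feasible N m g f ?PX sr (y r)"
    unfolding lp_feasible_def
  proof
    fix x assume "x \<in> ?PX"
    then have "f (fst (Orcl (y r))) - gdot N m g (fst (Orcl (y r))) (y r) \<le> f x - gdot N m g x (y r)"
      using OB[of "y r"] \<open>x \<in> ?PX\<close> by blast
    moreover have "sr = f (fst (Orcl (y r))) - gdot N m g (fst (Orcl (y r))) (y r)"
      using OC[of "y r"] unfolding sr_def .
    ultimately show "sr + gdot N m g x (y r) \<le> f x" by linarith
  qed
  have objhat: "lp_obj N m \<mu> g sr (y r) = \<alpha>LB" by (simp add: \<alpha>LB_def lp_obj_def)
  have ub: "lp_obj N m \<mu> g z0 z \<le> \<alpha>UB" if "lp_feasible N m g f ?PX z0 z" for z0 z
  proof -
    have "lp_feasible N m g f (Xd r) z0 z" using that Xdr(2) by (auto simp: lp_feasible_def)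
    then show ?thesis using opt by (simp add: lp_optimizer_def \<alpha>UB_def)
  qed
  define Sset where "Sset = {lp_obj N m \<mu> g z0 z | z0 z. lp_feasible N m g f ?PX z0 z}"
  have LSIPeq: "LSIP = Sup Sset" by (simp add: LSIP_def Sset_def lp_value_def)
  have inS: "\<alpha>LB \<in> Sset" unfolding Sset_def using hatfeas objhat by force
  have bddS: "bdd_above Sset" unfolding Sset_def bdd_above_def using ub by blast
  have L1: "\<alpha>LB \<le> LSIP" unfolding LSIPeq by (rule cSup_upper[OF inS bddS])
  have L2: "LSIP \<le> \<alpha>UB" unfolding LSIPeq
    by (rule cSup_least) (use inS in blast, auto simp: Sset_def intro: ub)
  have gap: "\<alpha>UB - \<alpha>LB \<le> \<epsilon>" using stop by (simp add: \<alpha>UB_def \<alpha>LB_def sr_def)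
  have wf: "dual_feasible N m \<mu> g (Xd r) (w r)" using dopt by (simp add: dual_optimizer_def)
  have w0: "\<And>x. x \<in> Xd r \<Longrightarrow> w r x \<ge> 0" and w1: "(\<Sum>x\<in>Xd r. w r x) = 1"
    and wg: "\<And>i j. (i,j) \<in> ?J \<Longrightarrow> (\<Sum>x\<in>Xd r. g i j (x i) * w r x) = gbar \<mu> g i j"
    using wf unfolding dual_feasible_def by auto
  have subsp: "Xd r \<subseteq> space (PiM {..<N} \<mu>)" using Xdr(2) sp by simp
  have hprob: "prob_space h\<mu>" unfolding h\<mu>_def by (rule discrete_prob[OF Xdr(3) subsp w0 w1])
  have hsets: "sets h\<mu> = sets (PiM {..<N} \<mu>)" unfolding h\<mu>_def by (rule discrete_sets)
  have hmarg: "integral\<^sup>L (distr h\<mu> (\<mu> i) (\<lambda>x. x i)) (g i j) = integral\<^sup>L (\<mu> i) (g i j)"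
    if "i < N" "j \<in> {1..m i}" for i j
  proof -
    have p: "(i,j) \<in> ?J" using that by (simp add: Jset_iff)
    have i: "i \<in> {..<N}" using that by simp
    have hm: "(\<lambda>x. g i j (x i)) \<in> borel_measurable (PiM {..<N} \<mu>)"
      using measurable_compose[OF measurable_component_singleton[OF i, where M=\<mu>] gmeas[OF p]] by simp
    have "integral\<^sup>L (distr h\<mu> (\<mu> i) (\<lambda>x. x i)) (g i j) = integral\<^sup>L h\<mu> (\<lambda>x. g i j (x i))"
      by (rule marginal_integral[OF hsets that(1) gmeas[OF p]])
    also have "\<dots> = (\<Sum>x\<in>Xd r. w r x * g i j (x i))"
      unfolding h\<mu>_def by (rule discrete_integral[OF Xdr(3) subsp w0 hm])
    also have "\<dots> = gbar \<mu> g i j" using wg[OF p] by (simp add: mult.commute)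
    finally show ?thesis by (simp add: gbar_def)
  qed
  have hGamma: "h\<mu> \<in> Gamma N m \<mu> g" unfolding Gamma_def using hprob hsets hmarg by blast
  have hint: "integral\<^sup>L h\<mu> f = \<alpha>UB"
  proof -
    have "integral\<^sup>L h\<mu> f = (\<Sum>x\<in>Xd r. w r x * f x)"
      unfolding h\<mu>_def by (rule discrete_integral[OF Xdr(3) subsp w0 fmeas])
    also have "\<dots> = (\<Sum>x\<in>Xd r. f x * w r x)" by (simp add: mult.commute)
    also have "\<dots> = \<alpha>UB" unfolding \<alpha>UB_def by (rule strong_duality[OF Xdr(3) opt dopt])
    finally show ?thesis .
  qed
  have glow: "\<alpha>LB \<le> integral\<^sup>L \<nu> f" if "\<nu> \<in> Gamma N m \<mu> g" for \<nu>
    using gamma_lower[OF that sp fmeas fB gmeas gB hatfeas] objhat by simp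
  have M1: "\<alpha>LB \<le> MOT" unfolding MOT_def mot_value_def
    by (rule cInf_greatest) (use hGamma glow in auto)
  have M2: "MOT \<le> \<alpha>UB" unfolding MOT_def mot_value_def
  proof -
    have "bdd_below ((\<lambda>\<nu>. integral\<^sup>L \<nu> f) ` Gamma N m \<mu> g)" unfolding bdd_below_def using glow by blast
    then have "Inf ((\<lambda>\<nu>. integral\<^sup>L \<nu> f) ` Gamma N m \<mu> g) \<le> integral\<^sup>L h\<mu> f"
      using hGamma by (intro cInf_lower) auto
    then show "Inf ((\<lambda>\<nu>. integral\<^sup>L \<nu> f) ` Gamma N m \<mu> g) \<le> \<alpha>UB" using hint by simp
  qed
  have C1: "\<alpha>LB \<le> LSIP" by (rule L1)
  have C2: "LSIP \<le> \<alpha>UB" by (rule L2)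
  have C3: "\<alpha>UB - \<alpha>LB \<le> \<epsilon>" by (rule gap)
  have C5: "\<bar>LSIP - lp_obj N m \<mu> g sr (y r)\<bar> \<le> \<epsilon>" using L1 L2 gap objhat by simp
  have C8: "\<bar>integral\<^sup>L h\<mu> f - MOT\<bar> \<le> \<epsilon>" using M1 M2 gap hint by simp
  show ?thesis
    unfolding Let_def
    apply (rule exI[of _ r])
    using prev stop C1 C2 C3 hatfeas C5 objhat hGamma C8 hint
    unfolding \<alpha>UB_def \<alpha>LB_def LSIP_def sr_def h\<mu>_def MOT_def
    by (intro conjI) assumption+
qed


end
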